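(* Let $G$ be the $m\times n$ grid with $m,n\ge 2$. Every minimal landmark set $L$ of $G$ satisfies either $|L|\in\{2,3\}$, or $|L|$ is even and $4\le |L|\le 2\min\{m,n\}-2$.
   Context: The $m\times n$ grid $G$ has vertex set $V=\{(i,j):1\le i\le m,\ 1\le j\le n\}$, with $(i_1,j_1),(i_2,j_2)$ adjacent iff $|i_1-i_2|+|j_1-j_2|=1$; thus $d((i_1,j_1),(i_2,j_2))=|i_1-i_2|+|j_1-j_2|$. A vertex $x$ separates $u,v$ if $d(x,u)\neq d(x,v)$. A landmark set is $L\subseteq V$ such that every pair of distinct vertices is separated by some vertex of $L$; it is minimal if no proper subset of it is a landmark set. *)

theory Defs
  imports Main
begin

definition grid_vertices :: "nat \<Rightarrow> nat \<Rightarrow> (nat \<times> nat) set" where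
  "grid_vertices m n = {(i, j). 1 \<le> i \<and> i \<le> m \<and> 1 \<le> j \<and> j \<le> n}"

definition grid_dist :: "nat \<times> nat \<Rightarrow> nat \<times> nat \<Rightarrow> nat" where
  "grid_dist u v = nat (\<bar>int (fst u) - int (fst v)\<bar> + \<bar>int (snd u) - int (snd v)\<bar>)"

definition separates :: "nat \<times> nat \<Rightarrow> nat \<times> nat \<Rightarrow> nat \<times> nat \<Rightarrow> bool" where
  "separates x u v \<longleftrightarrow> grid_dist x u \<noteq> grid_dist x v"

definition landmark_set :: "nat \<Rightarrow> nat \<Rightarrow> (nat \<times> nat) set \<Rightarrow> bool" where
  "landmark_set m n L \<longleftrightarrow> L \<subseteq> grid_vertices m n \<and>
     (\<forall>u\<in>grid_vertices m n. \<forall>v\<in>grid_vertices m n. u \<noteq> v \<longrightarrow> (\<exists>x\<in>L. separates x u v))"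

definition minimal_landmark_set :: "nat \<Rightarrow> nat \<Rightarrow> (nat \<times> nat) set \<Rightarrow> bool" where
  "minimal_landmark_set m n L \<longleftrightarrow> landmark_set m n L \<and> (\<forall>L'. L' \<subset> L \<longrightarrow> \<not> landmark_set m n L')"

end

theory Submission
  imports Defs
begin

definition sd :: "'a set \<Rightarrow> 'a set \<Rightarrow> 'a set" where
  "sd A B = (A - B) \<union> (B - A)"

definition chain_on :: "'a set set \<Rightarrow> bool" where
  "chain_on F \<longleftrightarrow> (\<forall>A\<in>F. \<forall>B\<in>F. A \<subseteq> B \<or> B \<subseteq> A)"

lemma sd_sym: "sd A B = sd B A"
  unfolding sd_def by blast

lemma sd_single_iff: "sd A B = {y} \<longleftrightarrow> (y \<in> A \<longleftrightarrow> y \<notin> B) \<and> (\<forall>w. w \<noteq> y \<longrightarrow> (w \<in> A \<longleftrightarrow> w \<in> B))"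
  unfolding sd_def by blast

lemma sd_co_iff:
  assumes "A \<subseteq> L" "B \<subseteq> L"
  shows "sd A B = L - {x} \<longleftrightarrow> (x \<in> A \<longleftrightarrow> x \<in> B) \<and> (\<forall>w\<in>L. w \<noteq> x \<longrightarrow> (w \<in> A \<longleftrightarrow> w \<notin> B))"
  using assms unfolding sd_def by blast

lemma chain_on_card_le:
  assumes "chain_on F" "A \<in> F" "B \<in> F" "finite A" "finite B" "card A \<le> card B"
  shows "A \<subseteq> B"
proof -
  from assms(1-3) have "A \<subseteq> B \<or> B \<subseteq> A" by (auto simp: chain_on_def)
  thus ?thesis
  proof
    assume "B \<subseteq> A"
    with assms(4,6) have "B = A" by (metis card_mono card_subset_eq le_antisym)
    thus ?thesis by simp
  qed simp
qed

lemma chain_on_card_eq: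
  assumes "chain_on F" "A \<in> F" "B \<in> F" "finite A" "finite B" "card A = card B"
  shows "A = B"
  using chain_on_card_le[OF assms(1-5)] chain_on_card_le[OF assms(1,3,2,5,4)] assms(6) by auto

locale tc =
  fixes L :: "'a set" and RR CC :: "'a set set"
  assumes fin: "finite L"
    and Rsub: "\<And>R. R \<in> RR \<Longrightarrow> R \<subseteq> L"
    and Csub: "\<And>C. C \<in> CC \<Longrightarrow> C \<subseteq> L"
    and chR: "chain_on RR" and chC: "chain_on CC"
    and lm1: "\<And>R C. R \<in> RR \<Longrightarrow> C \<in> CC \<Longrightarrow> R \<noteq> C"
    and lm2: "\<And>R C. R \<in> RR \<Longrightarrow> C \<in> CC \<Longrightarrow> R \<noteq> L - C"
begin

definition cov where "cov \<longleftrightarrow> (\<forall>x\<in>L. \<exists>R\<in>RR. \<exists>C\<in>CC. sd R C = {x} \<or> sd R C = L - {x})"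
definition nt where "nt A \<longleftrightarrow> A \<noteq> {} \<and> A \<noteq> L"
definition Bed where "Bed R C z \<longleftrightarrow> R \<in> RR \<and> C \<in> CC \<and> nt R \<and> nt C \<and> sd R C = {z}"
definition Aed where "Aed R C z \<longleftrightarrow> R \<in> RR \<and> C \<in> CC \<and> nt R \<and> nt C \<and> sd R C = L - {z}"

lemma finR: "R \<in> RR \<Longrightarrow> finite R" using Rsub fin finite_subset by blast
lemma finC: "C \<in> CC \<Longrightarrow> finite C" using Csub fin finite_subset by blast

lemma R_le: "R \<in> RR \<Longrightarrow> R' \<in> RR \<Longrightarrow> card R \<le> card R' \<Longrightarrow> R \<subseteq> R'"
  using chain_on_card_le[OF chR] finR by blast
lemma C_le: "C \<in> CC \<Longrightarrow> C' \<in> CC \<Longrightarrow> card C \<le> card C' \<Longrightarrow> C \<subseteq> C'"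
  using chain_on_card_le[OF chC] finC by blast
lemma R_eq: "R \<in> RR \<Longrightarrow> R' \<in> RR \<Longrightarrow> card R = card R' \<Longrightarrow> R = R'"
  using R_le[of R R'] R_le[of R' R] by auto
lemma C_eq: "C \<in> CC \<Longrightarrow> C' \<in> CC \<Longrightarrow> card C = card C' \<Longrightarrow> C = C'"
  using C_le[of C C'] C_le[of C' C] by auto

lemma R_cmp: "R \<in> RR \<Longrightarrow> R' \<in> RR \<Longrightarrow> R \<subseteq> R' \<or> R' \<subseteq> R"
  using chR by (auto simp: chain_on_def)
lemma C_cmp: "C \<in> CC \<Longrightarrow> C' \<in> CC \<Longrightarrow> C \<subseteq> C' \<or> C' \<subseteq> C"
  using chC by (auto simp: chain_on_def)

lemma Aed_label: "Aed R C x \<Longrightarrow> x \<in> L"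
proof (rule ccontr)
  assume a: "Aed R C x" "x \<notin> L"
  hence "sd R C = L" by (auto simp: Aed_def)
  moreover have "R \<subseteq> L" "C \<subseteq> L" using a Rsub Csub by (auto simp: Aed_def)
  ultimately have "R = L - C" unfolding sd_def by blast
  thus False using lm2 a by (auto simp: Aed_def)
qed

lemma Bed_label: "Bed R C y \<Longrightarrow> y \<in> L"
proof -
  assume a: "Bed R C y"
  hence "y \<in> sd R C" by (auto simp: Bed_def)
  moreover have "R \<subseteq> L" "C \<subseteq> L" using a Rsub Csub by (auto simp: Bed_def)
  ultimately show ?thesis unfolding sd_def by blast
qed

lemma pair_a:
  assumes e: "Bed R1 C1 y" and f: "Aed R2 C2 x" and "R1 \<subseteq> R2" "C1 \<subseteq> C2"
  shows "(R1 = {x} \<and> C1 = {x,y}) \<or> (R1 = {x,y} \<and> C1 = {x})"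
proof -
  have s: "R1 \<subseteq> L" "C1 \<subseteq> L" "R2 \<subseteq> L" "C2 \<subseteq> L" using e f Rsub Csub by (auto simp: Bed_def Aed_def)
  have e1: "(y \<in> R1 \<longleftrightarrow> y \<notin> C1)" "\<And>w. w \<noteq> y \<Longrightarrow> (w \<in> R1 \<longleftrightarrow> w \<in> C1)"
    using e by (auto simp: Bed_def sd_single_iff)
  have f1: "(x \<in> R2 \<longleftrightarrow> x \<in> C2)" "\<And>w. w \<in> L \<Longrightarrow> w \<noteq> x \<Longrightarrow> (w \<in> R2 \<longleftrightarrow> w \<notin> C2)"
    using f s sd_co_iff[of R2 L C2 x] by (auto simp: Aed_def)
  have sub1: "w \<notin> R1 \<and> w \<notin> C1" if "w \<in> L" "w \<noteq> x" "w \<noteq> y" for w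
  proof -
    have "w \<in> R1 \<longleftrightarrow> w \<in> C1" using e1(2) that by blast
    moreover have "w \<in> R2 \<longleftrightarrow> w \<notin> C2" using f1(2) that by blast
    ultimately show ?thesis using assms(3,4) by blast
  qed
  have sub: "R1 \<subseteq> {x,y}" "C1 \<subseteq> {x,y}"
    using sub1 s by blast+
  have ne: "R1 \<noteq> {}" "C1 \<noteq> {}" using e by (auto simp: Bed_def nt_def)
  show ?thesis
  proof (cases "x = y")
    case True
    then show ?thesis using sub ne e1 by auto
  next
    case False
    have "x \<in> R1 \<longleftrightarrow> x \<in> C1" using e1(2) False by blast
    then show ?thesis using sub ne e1(1) by auto
  qed
qed

lemma pair_b:
  assumes e: "Bed R1 C1 y" and f: "Aed R2 C2 x" and "R2 \<subseteq> R1" "C2 \<subseteq> C1"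
  shows "(R1 = L - {x} \<and> C1 = L - {x,y}) \<or> (R1 = L - {x,y} \<and> C1 = L - {x})"
proof -
  have s: "R1 \<subseteq> L" "C1 \<subseteq> L" "R2 \<subseteq> L" "C2 \<subseteq> L" using e f Rsub Csub by (auto simp: Bed_def Aed_def)
  have e1: "(y \<in> R1 \<longleftrightarrow> y \<notin> C1)" "\<And>w. w \<noteq> y \<Longrightarrow> (w \<in> R1 \<longleftrightarrow> w \<in> C1)"
    using e by (auto simp: Bed_def sd_single_iff)
  have f1: "(x \<in> R2 \<longleftrightarrow> x \<in> C2)" "\<And>w. w \<in> L \<Longrightarrow> w \<noteq> x \<Longrightarrow> (w \<in> R2 \<longleftrightarrow> w \<notin> C2)"
    using f s sd_co_iff[of R2 L C2 x] by (auto simp: Aed_def)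
  have sub1: "w \<in> R1 \<and> w \<in> C1" if "w \<in> L" "w \<noteq> x" "w \<noteq> y" for w
  proof -
    have "w \<in> R1 \<longleftrightarrow> w \<in> C1" using e1(2) that by blast
    moreover have "w \<in> R2 \<longleftrightarrow> w \<notin> C2" using f1(2) that by blast
    ultimately show ?thesis using assms(3,4) by blast
  qed
  have ne: "R1 \<noteq> L" "C1 \<noteq> L" using e by (auto simp: Bed_def nt_def)
  have yL: "y \<in> L" using Bed_label e .
  have xy: "x \<noteq> y"
  proof
    assume xy: "x = y"
    have "L \<subseteq> R1 \<union> C1" using sub1 xy e1(1) by blast
    hence "R1 = L \<or> C1 = L" using sub1 s xy e1(1) by blast
    thus False using ne by blast
  qed
  have xin: "x \<in> R1 \<longleftrightarrow> x \<in> C1" using e1(2) xy by blast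
  have nx: "x \<notin> R1"
  proof
    assume "x \<in> R1"
    hence "x \<in> C1" using xin by blast
    have "L \<subseteq> R1 \<or> L \<subseteq> C1"
    proof (cases "y \<in> R1")
      case True
      then show ?thesis using sub1 \<open>x \<in> R1\<close> by blast
    next
      case False
      then have "y \<in> C1" using e1(1) by blast
      then show ?thesis using sub1 \<open>x \<in> C1\<close> by blast
    qed
    thus False using ne s by blast
  qed
  have nx2: "x \<notin> C1" using nx xin by blast
  show ?thesis
  proof (cases "y \<in> R1")
    case True
    have "R1 = L - {x}" using True nx sub1 s by blast
    moreover have "C1 = L - {x,y}" using True e1(1) nx2 sub1 s by blast
    ultimately show ?thesis by blast
  next
    case False
    have "R1 = L - {x,y}" using False nx sub1 s by blast
    moreover have "C1 = L - {x}" using False e1(1) nx2 sub1 s yL by blast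
    ultimately show ?thesis by blast
  qed
qed


lemma pair_c:
  assumes e: "Bed R1 C1 y" and f: "Aed R2 C2 x" and "R1 \<subseteq> R2" "C2 \<subseteq> C1"
  shows "(R2 = L - {y} \<and> C2 = {x,y}) \<or> (R2 = L - {x,y} \<and> C2 = {y})"
proof -
  have s: "R1 \<subseteq> L" "C1 \<subseteq> L" "R2 \<subseteq> L" "C2 \<subseteq> L" using e f Rsub Csub by (auto simp: Bed_def Aed_def)
  have e1: "(y \<in> R1 \<longleftrightarrow> y \<notin> C1)" "\<And>w. w \<noteq> y \<Longrightarrow> (w \<in> R1 \<longleftrightarrow> w \<in> C1)"
    using e by (auto simp: Bed_def sd_single_iff)
  have f1: "(x \<in> R2 \<longleftrightarrow> x \<in> C2)" "\<And>w. w \<in> L \<Longrightarrow> w \<noteq> x \<Longrightarrow> (w \<in> R2 \<longleftrightarrow> w \<notin> C2)"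
    using f s sd_co_iff[of R2 L C2 x] by (auto simp: Aed_def)
  have sub1: "w \<in> R2 \<and> w \<notin> C2" if "w \<in> L" "w \<noteq> x" "w \<noteq> y" for w
  proof -
    have "w \<in> R1 \<longleftrightarrow> w \<in> C1" using e1(2) that by blast
    moreover have "w \<in> R2 \<longleftrightarrow> w \<notin> C2" using f1(2) that by blast
    ultimately show ?thesis using assms(3,4) by blast
  qed
  have ne: "R2 \<noteq> L" "C2 \<noteq> {}" using f by (auto simp: Aed_def nt_def)
  have yL: "y \<in> L" using Bed_label e .
  have xL: "x \<in> L" using Aed_label f .
  have xy: "x \<noteq> y"
  proof
    assume xy: "x = y"
    show False
    proof (cases "x \<in> R2")
      case True
      hence "L \<subseteq> R2" using sub1 xy by blast
      thus False using ne s by blast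
    next
      case False
      hence "C2 = {}" using f1(1) sub1 xy s by blast
      thus False using ne by blast
    qed
  qed
  have yeq: "y \<in> R2 \<longleftrightarrow> y \<notin> C2" using f1(2) xy yL by blast
  show ?thesis
  proof (cases "x \<in> R2")
    case True
    have "y \<notin> R2"
    proof
      assume "y \<in> R2"
      hence "L \<subseteq> R2" using sub1 True by blast
      thus False using ne s by blast
    qed
    hence "R2 = L - {y}" "C2 = {x,y}" using True f1(1) yeq sub1 s by blast+
    thus ?thesis by blast
  next
    case False
    have "C2 \<subseteq> {y}" using False f1(1) sub1 s by blast
    hence c2: "C2 = {y}" using ne by blast
    hence "R2 = L - {x,y}" using False yeq sub1 s by blast
    thus ?thesis using c2 by blast
  qed
qed

lemma pair_d:
  assumes e: "Bed R1 C1 y" and f: "Aed R2 C2 x" and "R2 \<subseteq> R1" "C1 \<subseteq> C2"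
  shows "(R2 = {x,y} \<and> C2 = L - {y}) \<or> (R2 = {y} \<and> C2 = L - {x,y})"
proof -
  have s: "R1 \<subseteq> L" "C1 \<subseteq> L" "R2 \<subseteq> L" "C2 \<subseteq> L" using e f Rsub Csub by (auto simp: Bed_def Aed_def)
  have e1: "(y \<in> R1 \<longleftrightarrow> y \<notin> C1)" "\<And>w. w \<noteq> y \<Longrightarrow> (w \<in> R1 \<longleftrightarrow> w \<in> C1)"
    using e by (auto simp: Bed_def sd_single_iff)
  have f1: "(x \<in> R2 \<longleftrightarrow> x \<in> C2)" "\<And>w. w \<in> L \<Longrightarrow> w \<noteq> x \<Longrightarrow> (w \<in> R2 \<longleftrightarrow> w \<notin> C2)"
    using f s sd_co_iff[of R2 L C2 x] by (auto simp: Aed_def)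
  have sub1: "w \<notin> R2 \<and> w \<in> C2" if "w \<in> L" "w \<noteq> x" "w \<noteq> y" for w
  proof -
    have "w \<in> R1 \<longleftrightarrow> w \<in> C1" using e1(2) that by blast
    moreover have "w \<in> R2 \<longleftrightarrow> w \<notin> C2" using f1(2) that by blast
    ultimately show ?thesis using assms(3,4) by blast
  qed
  have ne: "R2 \<noteq> {}" "C2 \<noteq> L" using f by (auto simp: Aed_def nt_def)
  have yL: "y \<in> L" using Bed_label e .
  have xL: "x \<in> L" using Aed_label f .
  have xy: "x \<noteq> y"
  proof
    assume xy: "x = y"
    show False
    proof (cases "x \<in> R2")
      case True
      hence "L \<subseteq> C2" using sub1 xy f1(1) by blast
      thus False using ne s by blast
    next
      case False
      hence "R2 = {}" using sub1 xy s by blast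
      thus False using ne by blast
    qed
  qed
  have yeq: "y \<in> R2 \<longleftrightarrow> y \<notin> C2" using f1(2) xy yL by blast
  show ?thesis
  proof (cases "x \<in> R2")
    case True
    have "y \<notin> C2"
    proof
      assume "y \<in> C2"
      hence "L \<subseteq> C2" using sub1 True f1(1) by blast
      thus False using ne s by blast
    qed
    hence "R2 = {x,y}" "C2 = L - {y}" using True f1(1) yeq sub1 s by blast+
    thus ?thesis by blast
  next
    case False
    have "R2 \<subseteq> {y}" using False sub1 s by blast
    hence r2: "R2 = {y}" using ne by blast
    hence "C2 = L - {x,y}" using False f1(1) yeq sub1 s by blast
    thus ?thesis using r2 by blast
  qed
qed

end

lemma card4: "A \<subseteq> {a,b,c,d} \<Longrightarrow> card A \<le> 4"
proof -
  assume "A \<subseteq> {a,b,c,d}"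
  hence "card A \<le> card {a,b,c,d}" by (simp add: card_mono)
  also have "\<dots> \<le> 4" by (simp add: card_insert_if)
  finally show ?thesis .
qed

lemma ss_ex: "(\<forall>a\<in>A. \<forall>b\<in>A. a = b) \<Longrightarrow> \<exists>a. A \<subseteq> {a}"
  by blast

context tc begin

lemma card_co1: "a \<in> L \<Longrightarrow> card (L - {a}) = card L - 1"
  using fin by simp

lemma card_co2: "a \<in> L \<Longrightarrow> b \<in> L \<Longrightarrow> a \<noteq> b \<Longrightarrow> card (L - {a,b}) = card L - 2"
proof -
  assume a: "a \<in> L" "b \<in> L" "a \<noteq> b"
  have "card (L - {a,b}) = card L - card {a,b}" using a fin by (simp add: card_Diff_subset)
  thus ?thesis using a by simp
qed

lemma coR_eq: assumes "L - {a} \<in> RR" "L - {b} \<in> RR" "a \<in> L" "b \<in> L" shows "a = b"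
proof -
  have "card (L - {a}) = card (L - {b})" using card_co1 assms(3,4) by simp
  hence "L - {a} = L - {b}" using R_eq assms(1,2) by blast
  thus ?thesis using assms(3,4) by blast
qed
lemma coC_eq: assumes "L - {a} \<in> CC" "L - {b} \<in> CC" "a \<in> L" "b \<in> L" shows "a = b"
proof -
  have "card (L - {a}) = card (L - {b})" using card_co1 assms(3,4) by simp
  hence "L - {a} = L - {b}" using C_eq assms(1,2) by blast
  thus ?thesis using assms(3,4) by blast
qed
lemma sR_eq: "{a} \<in> RR \<Longrightarrow> {b} \<in> RR \<Longrightarrow> a = b"
  using R_eq[of "{a}" "{b}"] by simp
lemma sC_eq: "{a} \<in> CC \<Longrightarrow> {b} \<in> CC \<Longrightarrow> a = b"
  using C_eq[of "{a}" "{b}"] by simp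

lemma triv_excl: assumes "({} \<in> RR \<or> L \<in> RR) \<and> ({} \<in> CC \<or> L \<in> CC)" shows False
proof -
  have a: "{} \<in> RR \<or> L \<in> RR" and b: "{} \<in> CC \<or> L \<in> CC" using assms by auto
  from a show False
  proof
    assume r: "{} \<in> RR"
    from b show False
    proof
      assume "{} \<in> CC" thus False using lm1[OF r] by blast
    next
      assume "L \<in> CC" thus False using lm2[OF r] by blast
    qed
  next
    assume r: "L \<in> RR"
    from b show False
    proof
      assume "{} \<in> CC" thus False using lm2[OF r] by fastforce
    next
      assume "L \<in> CC" thus False using lm1[OF r] by blast
    qed
  qed
qed

lemma core:
  assumes cv: cov and k5: "5 \<le> card L"
    and e: "Bed {x} {x,y} y" and f: "Aed R2 C2 x" and xR2: "x \<in> R2" and xyC2: "{x,y} \<subseteq> C2"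
  shows False
proof -
  have xy: "x \<noteq> y" using e by (auto simp: Bed_def sd_def)
  have R1: "{x} \<in> RR" and C1: "{x,y} \<in> CC" using e by (auto simp: Bed_def)
  have xL: "x \<in> L" and yL: "y \<in> L" using C1 Csub by auto
  have fR2: "R2 \<in> RR" "C2 \<in> CC" using f by (auto simp: Aed_def)
  define Zf where "Zf = {z \<in> L. R2 = {x,z} \<and> C2 = L - {z}}"
  define Al where "Al = {z \<in> L. z \<noteq> y \<and> {y} \<in> CC \<and> L - {z,y} \<in> RR}"
  define Tc where "Tc = {t \<in> L. L - {t} \<in> RR \<and> ({} \<in> CC \<or> L \<in> CC)}"
  define Tr where "Tr = {t \<in> L. L - {t} \<in> CC \<and> ({} \<in> RR \<or> L \<in> RR)}"
  have cover: "w \<in> {x,y} \<union> Zf \<union> Al \<union> Tc \<union> Tr" if wL: "w \<in> L" for w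
  proof -
    obtain R C where RC: "R \<in> RR" "C \<in> CC" "sd R C = {w} \<or> sd R C = L - {w}"
      using cv wL unfolding cov_def by blast
    have RL: "R \<subseteq> L" and CL: "C \<subseteq> L" using RC Rsub Csub by auto
    show ?thesis
    proof (cases "nt R \<and> nt C")
      case True
      note ntRC = True
      show ?thesis
      proof (cases "sd R C = {w}")
        case True
        have g: "Bed R C w" using True ntRC RC by (simp add: Bed_def)
        have cR: "R \<subseteq> R2 \<or> R2 \<subseteq> R" using R_cmp RC fR2 by blast
        have cC: "C \<subseteq> C2 \<or> C2 \<subseteq> C" using C_cmp RC fR2 by blast
        show ?thesis
        proof (cases "R \<subseteq> R2")
          case RR2: True
          show ?thesis
          proof (cases "C \<subseteq> C2")
            case True
            from pair_a[OF g f RR2 True]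
            have "(R = {x} \<and> C = {x,w}) \<or> (R = {x,w} \<and> C = {x})" .
            thus ?thesis
            proof
              assume a: "R = {x} \<and> C = {x,w}"
              have "w \<noteq> x" using a lm1 RC by blast
              hence "card C = card {x,y}" using a xy by simp
              hence "C = {x,y}" using C_eq RC C1 by blast
              thus ?thesis using a \<open>w \<noteq> x\<close> by blast
            next
              assume a: "R = {x,w} \<and> C = {x}"
              thus ?thesis using lm1 R1 RC by blast
            qed
          next
            case False
            hence CC2: "C2 \<subseteq> C" using cC by blast
            from pair_c[OF g f RR2 CC2]
            have "(R2 = L - {w} \<and> C2 = {x,w}) \<or> (R2 = L - {x,w} \<and> C2 = {w})" .
            thus ?thesis using xR2 xyC2 xy by blast
          qed
        next
          case False
          hence R2R: "R2 \<subseteq> R" using cR by blast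
          show ?thesis
          proof (cases "C \<subseteq> C2")
            case True
            from pair_d[OF g f R2R True]
            have "(R2 = {x,w} \<and> C2 = L - {w}) \<or> (R2 = {w} \<and> C2 = L - {x,w})" .
            thus ?thesis
            proof
              assume "R2 = {x,w} \<and> C2 = L - {w}"
              hence "w \<in> Zf" using wL by (simp add: Zf_def)
              thus ?thesis by blast
            next
              assume "R2 = {w} \<and> C2 = L - {x,w}"
              thus ?thesis using xyC2 by blast
            qed
          next
            case False
            hence CC2: "C2 \<subseteq> C" using cC by blast
            from pair_b[OF g f R2R CC2]
            have "(R = L - {x} \<and> C = L - {x,w}) \<or> (R = L - {x,w} \<and> C = L - {x})" .
            thus ?thesis using CC2 xyC2 by blast
          qed
        qed
      next
        case False
        hence sdc: "sd R C = L - {w}" using RC by blast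
        have g: "Aed R C w" using sdc ntRC RC by (simp add: Aed_def)
        have xR: "{x} \<subseteq> R"
        proof -
          have "{x} \<subseteq> R \<or> R \<subseteq> {x}" using R_cmp R1 RC by blast
          moreover have "R \<noteq> {}" using ntRC by (simp add: nt_def)
          ultimately show ?thesis by blast
        qed
        have cC: "C \<subseteq> {x,y} \<or> {x,y} \<subseteq> C" using C_cmp RC C1 by blast
        show ?thesis
        proof (cases "{x,y} \<subseteq> C")
          case True
          from pair_a[OF e g xR True]
          have "({x} = {w} \<and> {x, y} = {w, y}) \<or> ({x} = {w, y} \<and> {x, y} = {w})" .
          thus ?thesis by blast
        next
          case False
          hence Cs: "C \<subseteq> {x,y}" using cC by blast
          from pair_c[OF e g xR Cs]
          have "(R = L - {y} \<and> C = {w,y}) \<or> (R = L - {w,y} \<and> C = {y})" .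
          thus ?thesis
          proof
            assume "R = L - {y} \<and> C = {w,y}"
            thus ?thesis using Cs by blast
          next
            assume a: "R = L - {w,y} \<and> C = {y}"
            have "w \<noteq> y"
            proof
              assume "w = y"
              hence "sd R C = L" using a yL unfolding sd_def by blast
              thus False using sdc wL by blast
            qed
            hence "w \<in> Al" using a RC wL by (simp add: Al_def)
            thus ?thesis by blast
          qed
        qed
      qed
    next
      case False
      show ?thesis
      proof (cases "nt R")
        case True
        hence "C = {} \<or> C = L" using False by (simp add: nt_def)
        hence triv: "{} \<in> CC \<or> L \<in> CC" using RC by blast
        have "R = {w} \<or> R = L - {w}" using \<open>C = {} \<or> C = L\<close> RC RL wL unfolding sd_def by blast
        thus ?thesis
        proof
          assume "R = {w}"
          hence "w = x" using sR_eq R1 RC by blast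
          thus ?thesis by blast
        next
          assume "R = L - {w}"
          hence "w \<in> Tc" using RC wL triv by (simp add: Tc_def)
          thus ?thesis by blast
        qed
      next
        case False
        hence "R = {} \<or> R = L" by (simp add: nt_def)
        hence triv: "{} \<in> RR \<or> L \<in> RR" using RC by blast
        have "C = {w} \<or> C = L - {w}" using \<open>R = {} \<or> R = L\<close> RC CL wL unfolding sd_def by blast
        thus ?thesis
        proof
          assume a: "C = {w}"
          have "card C \<le> card {x,y}" using a xy by simp
          hence "C \<subseteq> {x,y}" using C_le RC C1 by blast
          thus ?thesis using a by blast
        next
          assume "C = L - {w}"
          hence "w \<in> Tr" using RC wL triv by (simp add: Tr_def)
          thus ?thesis by blast
        qed
      qed
    qed
  qed
  have ssZ: "\<exists>a. Zf \<subseteq> {a}"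
    by (rule ss_ex) (auto simp: Zf_def)
  have ssA: "\<exists>a. Al \<subseteq> {a}"
  proof (rule ss_ex, intro ballI)
    fix a b assume ab: "a \<in> Al" "b \<in> Al"
    hence "card (L - {a,y}) = card (L - {b,y})" using card_co2 yL by (simp add: Al_def)
    hence "L - {a,y} = L - {b,y}" using R_eq ab by (simp add: Al_def)
    thus "a = b" using ab by (auto simp: Al_def)
  qed
  have ssTc: "\<exists>a. Tc \<subseteq> {a}"
    by (rule ss_ex) (use coR_eq in \<open>auto simp: Tc_def\<close>)
  have ssTr: "\<exists>a. Tr \<subseteq> {a}"
    by (rule ss_ex) (use coC_eq in \<open>auto simp: Tr_def\<close>)
  have rel1: "Tc \<noteq> {} \<Longrightarrow> Tr = {}"
    using triv_excl unfolding Tc_def Tr_def by blast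
  have rel2: "Tc \<subseteq> Al \<union> {y}" if ne: "Al \<noteq> {}"
  proof
    fix t assume t: "t \<in> Tc"
    obtain z where z: "z \<in> Al" using ne by blast
    have zR: "L - {z,y} \<in> RR" and zz: "z \<in> L" "z \<noteq> y" using z by (auto simp: Al_def)
    have tR: "L - {t} \<in> RR" "t \<in> L" using t by (auto simp: Tc_def)
    have "card (L - {z,y}) \<le> card (L - {t})" using card_co2[OF zz(1) yL zz(2)] card_co1[OF tR(2)] by simp
    hence "L - {z,y} \<subseteq> L - {t}" using R_le zR tR by blast
    hence "t \<in> {z,y}" using tR by blast
    thus "t \<in> Al \<union> {y}" using z by blast
  qed
  have rel3: "Tr \<subseteq> Zf" if ne: "Zf \<noteq> {}"
  proof
    fix t assume t: "t \<in> Tr"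
    obtain z where z: "z \<in> Zf" using ne by blast
    have "t = z" using coC_eq t z fR2 by (auto simp: Tr_def Zf_def)
    thus "t \<in> Zf" using z by simp
  qed
  obtain a1 where a1: "Zf \<subseteq> {a1}" using ssZ by blast
  obtain a2 where a2: "Al \<subseteq> {a2}" using ssA by blast
  obtain a3 where a3: "Tc \<subseteq> {a3}" using ssTc by blast
  obtain a4 where a4: "Tr \<subseteq> {a4}" using ssTr by blast
  have "card L \<le> 4"
  proof (cases "Tc = {}")
    case False
    hence "Tr = {}" using rel1 by blast
    show ?thesis
    proof (cases "Al = {}")
      case True
      have "L \<subseteq> {x,y,a1,a3}" using cover a1 a3 True \<open>Tr = {}\<close> by blast
      thus ?thesis by (rule card4)
    next
      case False
      have "L \<subseteq> {x,y,a1,a2}" using cover a1 a2 rel2[OF False] \<open>Tr = {}\<close> by blast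
      thus ?thesis by (rule card4)
    qed
  next
    case True
    show ?thesis
    proof (cases "Zf = {}")
      case True
      have "L \<subseteq> {x,y,a2,a4}" using cover a2 a4 True \<open>Tc = {}\<close> by blast
      thus ?thesis by (rule card4)
    next
      case False
      have "L \<subseteq> {x,y,a1,a2}" using cover a1 a2 rel3[OF False] \<open>Tc = {}\<close> by blast
      thus ?thesis by (rule card4)
    qed
  qed
  thus False using k5 by simp
qed

end

lemma sd_compl2: "R \<subseteq> L \<Longrightarrow> C \<subseteq> L \<Longrightarrow> sd (L - R) (L - C) = sd R C"
  unfolding sd_def by blast
lemma sd_compl1: "R \<subseteq> L \<Longrightarrow> C \<subseteq> L \<Longrightarrow> sd R (L - C) = L - sd R C"
  unfolding sd_def by blast

lemma chain_on_compl: "chain_on F \<Longrightarrow> chain_on ((-) L ` F)"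
  unfolding chain_on_def by blast

context tc begin

lemma swap: "tc L CC RR"
proof
  show "finite L" by (rule fin)
  show "\<And>R. R \<in> CC \<Longrightarrow> R \<subseteq> L" by (rule Csub)
  show "\<And>C. C \<in> RR \<Longrightarrow> C \<subseteq> L" by (rule Rsub)
  show "chain_on CC" by (rule chC)
  show "chain_on RR" by (rule chR)
  show "\<And>R C. R \<in> CC \<Longrightarrow> C \<in> RR \<Longrightarrow> R \<noteq> C" using lm1 by blast
  show "\<And>R C. R \<in> CC \<Longrightarrow> C \<in> RR \<Longrightarrow> R \<noteq> L - C"
  proof
    fix R C assume a: "R \<in> CC" "C \<in> RR" "R = L - C"
    hence "C = L - R" using Rsub[OF a(2)] by blast
    thus False using lm2[OF a(2,1)] by blast
  qed
qed

lemma cboth: "tc L ((-) L ` RR) ((-) L ` CC)"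
proof
  show "finite L" by (rule fin)
  show "\<And>R. R \<in> (-) L ` RR \<Longrightarrow> R \<subseteq> L" by blast
  show "\<And>C. C \<in> (-) L ` CC \<Longrightarrow> C \<subseteq> L" by blast
  show "chain_on ((-) L ` RR)" using chR by (rule chain_on_compl)
  show "chain_on ((-) L ` CC)" using chC by (rule chain_on_compl)
  show "\<And>R C. R \<in> (-) L ` RR \<Longrightarrow> C \<in> (-) L ` CC \<Longrightarrow> R \<noteq> C"
  proof
    fix R C assume a: "R \<in> (-) L ` RR" "C \<in> (-) L ` CC" "R = C"
    then obtain R0 C0 where b: "R0 \<in> RR" "C0 \<in> CC" "R = L - R0" "C = L - C0" by blast
    have "R0 = C0" using a(3) b Rsub[OF b(1)] Csub[OF b(2)] by blast
    thus False using lm1[OF b(1,2)] by blast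
  qed
  show "\<And>R C. R \<in> (-) L ` RR \<Longrightarrow> C \<in> (-) L ` CC \<Longrightarrow> R \<noteq> L - C"
  proof
    fix R C assume a: "R \<in> (-) L ` RR" "C \<in> (-) L ` CC" "R = L - C"
    then obtain R0 C0 where b: "R0 \<in> RR" "C0 \<in> CC" "R = L - R0" "C = L - C0" by blast
    have "R0 = L - C0" using a(3) b Rsub[OF b(1)] Csub[OF b(2)] by blast
    thus False using lm2[OF b(1,2)] by blast
  qed
qed

lemma ccol: "tc L RR ((-) L ` CC)"
proof
  show "finite L" by (rule fin)
  show "\<And>R. R \<in> RR \<Longrightarrow> R \<subseteq> L" by (rule Rsub)
  show "\<And>C. C \<in> (-) L ` CC \<Longrightarrow> C \<subseteq> L" by blast
  show "chain_on RR" by (rule chR)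
  show "chain_on ((-) L ` CC)" using chC by (rule chain_on_compl)
  show "\<And>R C. R \<in> RR \<Longrightarrow> C \<in> (-) L ` CC \<Longrightarrow> R \<noteq> C"
  proof
    fix R C assume a: "R \<in> RR" "C \<in> (-) L ` CC" "R = C"
    then obtain C0 where b: "C0 \<in> CC" "C = L - C0" by blast
    thus False using lm2[OF a(1) b(1)] a(3) by blast
  qed
  show "\<And>R C. R \<in> RR \<Longrightarrow> C \<in> (-) L ` CC \<Longrightarrow> R \<noteq> L - C"
  proof
    fix R C assume a: "R \<in> RR" "C \<in> (-) L ` CC" "R = L - C"
    then obtain C0 where b: "C0 \<in> CC" "C = L - C0" by blast
    have "R = C0" using a(3) b Csub[OF b(1)] by blast
    thus False using lm1[OF a(1) b(1)] by blast
  qed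
qed

lemma cov_swap: "cov \<Longrightarrow> tc.cov L CC RR"
  unfolding tc.cov_def[OF swap]
proof
  fix x assume c: cov and x: "x \<in> L"
  then obtain R C where a: "R \<in> RR" "C \<in> CC" "sd R C = {x} \<or> sd R C = L - {x}"
    unfolding cov_def by blast
  have "sd C R = sd R C" by (rule sd_sym)
  thus "\<exists>R\<in>CC. \<exists>C\<in>RR. sd R C = {x} \<or> sd R C = L - {x}" using a by metis
qed

lemma cov_cboth: "cov \<Longrightarrow> tc.cov L ((-) L ` RR) ((-) L ` CC)"
  unfolding tc.cov_def[OF cboth]
proof
  fix x assume c: cov and x: "x \<in> L"
  then obtain R C where a: "R \<in> RR" "C \<in> CC" "sd R C = {x} \<or> sd R C = L - {x}"
    unfolding cov_def by blast
  have "sd (L - R) (L - C) = sd R C" using sd_compl2 Rsub[OF a(1)] Csub[OF a(2)] by blast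
  thus "\<exists>R\<in>(-) L ` RR. \<exists>C\<in>(-) L ` CC. sd R C = {x} \<or> sd R C = L - {x}"
    using a by blast
qed

lemma cov_ccol: "cov \<Longrightarrow> tc.cov L RR ((-) L ` CC)"
  unfolding tc.cov_def[OF ccol]
proof
  fix x assume c: cov and x: "x \<in> L"
  then obtain R C where a: "R \<in> RR" "C \<in> CC" "sd R C = {x} \<or> sd R C = L - {x}"
    unfolding cov_def by blast
  have e: "sd R (L - C) = L - sd R C" using sd_compl1 Rsub[OF a(1)] Csub[OF a(2)] by blast
  have "sd R (L - C) = {x} \<or> sd R (L - C) = L - {x}"
    using a(3) e x by blast
  thus "\<exists>R\<in>RR. \<exists>C\<in>(-) L ` CC. sd R C = {x} \<or> sd R C = L - {x}"
    using a by blast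
qed

lemma nt_compl: "A \<subseteq> L \<Longrightarrow> nt (L - A) \<longleftrightarrow> nt A"
  unfolding nt_def by blast

lemma Bed_swap: "Bed R C z \<Longrightarrow> tc.Bed L CC RR C R z"
proof -
  assume a: "Bed R C z"
  have "sd C R = sd R C" by (rule sd_sym)
  thus ?thesis using a unfolding Bed_def tc.Bed_def[OF swap] tc.nt_def[OF swap] nt_def by simp
qed
lemma Aed_swap: "Aed R C z \<Longrightarrow> tc.Aed L CC RR C R z"
proof -
  assume a: "Aed R C z"
  have "sd C R = sd R C" by (rule sd_sym)
  thus ?thesis using a unfolding Aed_def tc.Aed_def[OF swap] tc.nt_def[OF swap] nt_def by simp
qed

lemma Bed_cboth: "Bed R C z \<Longrightarrow> tc.Bed L ((-) L ` RR) ((-) L ` CC) (L - R) (L - C) z"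
proof -
  assume a: "Bed R C z"
  have m: "R \<in> RR" "C \<in> CC" using a by (auto simp: Bed_def)
  have s: "R \<subseteq> L" "C \<subseteq> L" using m Rsub Csub by auto
  have "sd (L - R) (L - C) = {z}" using sd_compl2[OF s] a by (simp add: Bed_def)
  moreover have "L - R \<in> (-) L ` RR" "L - C \<in> (-) L ` CC" using m by auto
  moreover have "tc.nt L (L - R)" "tc.nt L (L - C)"
    using a nt_compl[OF s(1)] nt_compl[OF s(2)] unfolding tc.nt_def[OF cboth] nt_def Bed_def by auto
  ultimately show ?thesis unfolding tc.Bed_def[OF cboth] by blast
qed
lemma Aed_cboth: "Aed R C z \<Longrightarrow> tc.Aed L ((-) L ` RR) ((-) L ` CC) (L - R) (L - C) z"
proof -
  assume a: "Aed R C z"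
  have m: "R \<in> RR" "C \<in> CC" using a by (auto simp: Aed_def)
  have s: "R \<subseteq> L" "C \<subseteq> L" using m Rsub Csub by auto
  have "sd (L - R) (L - C) = L - {z}" using sd_compl2[OF s] a by (simp add: Aed_def)
  moreover have "L - R \<in> (-) L ` RR" "L - C \<in> (-) L ` CC" using m by auto
  moreover have "tc.nt L (L - R)" "tc.nt L (L - C)"
    using a nt_compl[OF s(1)] nt_compl[OF s(2)] unfolding tc.nt_def[OF cboth] nt_def Aed_def by auto
  ultimately show ?thesis unfolding tc.Aed_def[OF cboth] by blast
qed

lemma Bed_ccol: "Bed R C z \<Longrightarrow> tc.Aed L RR ((-) L ` CC) R (L - C) z"
proof -
  assume a: "Bed R C z"
  have s: "R \<subseteq> L" "C \<subseteq> L" using a Rsub Csub by (auto simp: Bed_def)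
  have "sd R (L - C) = L - {z}" using a sd_compl1[OF s] by (simp add: Bed_def)
  moreover have "L - C \<in> (-) L ` CC" using a by (auto simp: Bed_def)
  moreover have "tc.nt L R" "tc.nt L (L - C)"
    using a s unfolding tc.nt_def[OF ccol] nt_def Bed_def by auto
  ultimately show ?thesis using a unfolding tc.Aed_def[OF ccol] Bed_def by blast
qed
lemma Aed_ccol: "Aed R C z \<Longrightarrow> tc.Bed L RR ((-) L ` CC) R (L - C) z"
proof -
  assume a: "Aed R C z"
  have s: "R \<subseteq> L" "C \<subseteq> L" using a Rsub Csub by (auto simp: Aed_def)
  have zL: "z \<in> L" using Aed_label a .
  have "sd R (L - C) = {z}" using a sd_compl1[OF s] zL by (auto simp: Aed_def)
  moreover have "L - C \<in> (-) L ` CC" using a by (auto simp: Aed_def)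
  moreover have "tc.nt L R" "tc.nt L (L - C)"
    using a s unfolding tc.nt_def[OF ccol] nt_def Aed_def by auto
  ultimately show ?thesis using a unfolding tc.Bed_def[OF ccol] Aed_def by blast
qed

lemma caseA:
  assumes cv: cov and k5: "5 \<le> card L" and e: "Bed R1 C1 y" and f: "Aed R2 C2 x"
    and "R1 \<subseteq> R2" "C1 \<subseteq> C2"
  shows False
proof -
  from pair_a[OF e f assms(5,6)]
  show False
  proof
    assume a: "R1 = {x} \<and> C1 = {x,y}"
    show False using core[OF cv k5, of x y R2 C2] e f assms(5,6) a by auto
  next
    assume a: "R1 = {x,y} \<and> C1 = {x}"
    interpret S: tc L CC RR by (rule swap)
    have e': "S.Bed {x} {x,y} y" using Bed_swap[OF e] a by simp
    have f': "S.Aed C2 R2 x" using Aed_swap[OF f] .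
    show False using S.core[OF cov_swap[OF cv] k5 e' f'] assms(5,6) a by auto
  qed
qed

lemma caseB:
  assumes cv: cov and k5: "5 \<le> card L" and e: "Bed R1 C1 y" and f: "Aed R2 C2 x"
    and "R2 \<subseteq> R1" "C2 \<subseteq> C1"
  shows False
proof -
  interpret S: tc L "(-) L ` RR" "(-) L ` CC" by (rule cboth)
  show False
    using S.caseA[OF cov_cboth[OF cv] k5 Bed_cboth[OF e] Aed_cboth[OF f]] assms(5,6) by blast
qed

lemma step1:
  assumes cv: cov and k5: "5 \<le> card L" and e: "Bed R1 C1 y" and f: "Aed R2 C2 x"
  shows False
proof -
  have m: "R1 \<in> RR" "C1 \<in> CC" "R2 \<in> RR" "C2 \<in> CC" using e f by (auto simp: Bed_def Aed_def)
  have s: "C1 \<subseteq> L" "C2 \<subseteq> L" using m Csub by auto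
  interpret S: tc L RR "(-) L ` CC" by (rule ccol)
  have e': "S.Aed R1 (L - C1) y" using Bed_ccol[OF e] .
  have f': "S.Bed R2 (L - C2) x" using Aed_ccol[OF f] .
  have cv': "S.cov" using cov_ccol[OF cv] .
  have cR: "R1 \<subseteq> R2 \<or> R2 \<subseteq> R1" using R_cmp m by blast
  have cC: "C1 \<subseteq> C2 \<or> C2 \<subseteq> C1" using C_cmp m by blast
  show False
  proof (cases "R1 \<subseteq> R2")
    case True
    show False
    proof (cases "C1 \<subseteq> C2")
      case True
      thus False using caseA[OF cv k5 e f \<open>R1 \<subseteq> R2\<close>] by blast
    next
      case False
      hence "C2 \<subseteq> C1" using cC by blast
      hence "L - C1 \<subseteq> L - C2" by blast
      thus False using S.caseB[OF cv' k5 f' e' \<open>R1 \<subseteq> R2\<close>] by blast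
    qed
  next
    case False
    hence R21: "R2 \<subseteq> R1" using cR by blast
    show False
    proof (cases "C1 \<subseteq> C2")
      case True
      hence "L - C2 \<subseteq> L - C1" by blast
      thus False using S.caseA[OF cv' k5 f' e' R21] by blast
    next
      case False
      hence "C2 \<subseteq> C1" using cC by blast
      thus False using caseB[OF cv k5 e f R21] by blast
    qed
  qed
qed

end

context tc begin

definition lev where "lev R C = min (card R) (card C)"

lemma B_shape:
  assumes "Bed R C z"
  shows "(z \<notin> R \<and> C = insert z R \<and> card C = Suc (card R)) \<or> (z \<notin> C \<and> R = insert z C \<and> card R = Suc (card C))"
proof -
  have m: "R \<in> RR" "C \<in> CC" and sd1: "sd R C = {z}" using assms by (auto simp: Bed_def)
  have f: "finite R" "finite C" using m finR finC by auto
  have h1: "z \<in> R \<longleftrightarrow> z \<notin> C" and h2: "\<And>w. w \<noteq> z \<Longrightarrow> (w \<in> R \<longleftrightarrow> w \<in> C)"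
    using sd1 by (auto simp: sd_single_iff)
  show ?thesis
  proof (cases "z \<in> R")
    case True
    hence "z \<notin> C" using h1 by blast
    moreover have "R = insert z C"
    proof (rule set_eqI)
      fix w show "w \<in> R \<longleftrightarrow> w \<in> insert z C" by (cases "w = z") (use True h1 h2 in auto)
    qed
    ultimately show ?thesis using f by simp
  next
    case False
    hence "z \<in> C" using h1 by blast
    moreover have "C = insert z R"
    proof (rule set_eqI)
      fix w show "w \<in> C \<longleftrightarrow> w \<in> insert z R" by (cases "w = z") (use False h1 h2 in auto)
    qed
    ultimately show ?thesis using f False by simp
  qed
qed

lemma B_lev_range:
  assumes "Bed R C z"
  shows "1 \<le> lev R C \<and> lev R C + 2 \<le> card L"
proof -
  have m: "R \<in> RR" "C \<in> CC" and ntR: "nt R" and ntC: "nt C" using assms by (auto simp: Bed_def)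
  have s: "R \<subseteq> L" "C \<subseteq> L" using m Rsub Csub by auto
  have f: "finite R" "finite C" using m finR finC by auto
  have r1: "card R \<ge> 1" using ntR f by (auto simp: nt_def card_gt_0_iff Suc_le_eq)
  have c1: "card C \<ge> 1" using ntC f by (auto simp: nt_def card_gt_0_iff Suc_le_eq)
  have "R \<subset> L" using ntR s by (auto simp: nt_def)
  hence r2: "card R < card L" using fin by (simp add: psubset_card_mono)
  have "C \<subset> L" using ntC s by (auto simp: nt_def)
  hence c2: "card C < card L" using fin by (simp add: psubset_card_mono)
  show ?thesis using B_shape[OF assms] r1 c1 r2 c2 unfolding lev_def by auto
qed

lemma L1:
  assumes e1: "Bed R C z" and e2: "Bed R' C' z'" and lv: "lev R C = lev R' C'"
  shows "R = R' \<and> C = C'"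
proof -
  have m: "R \<in> RR" "C \<in> CC" "R' \<in> RR" "C' \<in> CC" using e1 e2 by (auto simp: Bed_def)
  have f: "finite R" "finite C" "finite R'" "finite C'" using m finR finC by auto
  have mix: False if a: "C = insert z R" "card C = Suc (card R)" and b: "R' = insert z' C'" "card R' = Suc (card C')"
      and lv2: "card R = card C'"
      and mR: "R \<in> RR" and mC: "C \<in> CC" and mR': "R' \<in> RR" and mC': "C' \<in> CC" for R C z R' C' z'
  proof -
    have fR: "finite R" "finite C'" using mR mC' finR finC by auto
    have RR': "R \<subseteq> R'" using R_le[OF mR mR'] b lv2 by simp
    have CC': "C' \<subseteq> C" using C_le[OF mC' mC] a lv2 by simp
    have neq: "R \<noteq> C'" using lm1 mR mC' by blast
    have "\<not> C' \<subseteq> R"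
    proof
      assume "C' \<subseteq> R"
      hence "C' = R" using card_subset_eq fR lv2 by metis
      thus False using neq by simp
    qed
    hence "R \<subset> R \<union> C'" by blast
    hence gt: "card R < card (R \<union> C')" using fR by (simp add: psubset_card_mono)
    have u1: "R \<union> C' \<subseteq> R'" using RR' b by blast
    have u2: "R \<union> C' \<subseteq> C" using CC' a by blast
    have fR': "finite R'" "finite C" using mR' mC finR finC by auto
    have "card (R \<union> C') \<le> card R'" using u1 fR' by (simp add: card_mono)
    hence e1: "R \<union> C' = R'" using u1 fR' card_subset_eq gt b lv2 by (metis Suc_leI le_antisym card_mono)
    have "card (R \<union> C') \<le> card C" using u2 fR' by (simp add: card_mono)
    hence e2: "R \<union> C' = C" using u2 fR' card_subset_eq gt a by (metis Suc_leI le_antisym card_mono)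
    have "R' = C" using e1 e2 by simp
    thus False using lm1 mR' mC by blast
  qed
  from B_shape[OF e1] B_shape[OF e2] show ?thesis
  proof (elim disjE conjE)
    assume a: "z \<notin> R" "C = insert z R" "card C = Suc (card R)" and b: "z' \<notin> R'" "C' = insert z' R'" "card C' = Suc (card R')"
    have "card R = card R'" using lv a b unfolding lev_def by simp
    hence "R = R'" using R_eq m by blast
    moreover have "card C = card C'" using a b \<open>card R = card R'\<close> by simp
    hence "C = C'" using C_eq m by blast
    ultimately show ?thesis by blast
  next
    assume a: "z \<notin> C" "R = insert z C" "card R = Suc (card C)" and b: "z' \<notin> C'" "R' = insert z' C'" "card R' = Suc (card C')"
    have "card C = card C'" using lv a b unfolding lev_def by simp
    hence "C = C'" using C_eq m by blast
    moreover have "card R = card R'" using a b \<open>card C = card C'\<close> by simp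
    hence "R = R'" using R_eq m by blast
    ultimately show ?thesis by blast
  next
    assume a: "z \<notin> R" "C = insert z R" "card C = Suc (card R)" and b: "z' \<notin> C'" "R' = insert z' C'" "card R' = Suc (card C')"
    have "card R = card C'" using lv a b unfolding lev_def by simp
    thus ?thesis using mix[OF a(2,3) b(2,3)] m by blast
  next
    assume a: "z \<notin> C" "R = insert z C" "card R = Suc (card C)" and b: "z' \<notin> R'" "C' = insert z' R'" "card C' = Suc (card R')"
    have "card R' = card C" using lv a b unfolding lev_def by simp
    thus ?thesis using mix[OF b(2,3) a(2,3)] m by blast
  qed
qed

lemma alt_row:
  assumes e1: "Bed R1 C1 z1" and e2: "Bed R2 C2 z2"
    and a1: "C1 = insert z1 R1" "card C1 = Suc (card R1)"
    and a2: "C2 = insert z2 R2" "card C2 = Suc (card R2)"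
    and lv: "card R2 = Suc (card R1)"
  shows "z1 = z2"
proof -
  have m: "R1 \<in> RR" "C1 \<in> CC" "R2 \<in> RR" "C2 \<in> CC" using e1 e2 by (auto simp: Bed_def)
  have f: "finite R1" "finite C1" "finite R2" "finite C2" using m finR finC by auto
  have "card R1 \<le> card R2" using lv by simp
  hence R12: "R1 \<subseteq> R2" using R_le m by blast
  have "card C1 \<le> card C2" using a1(2) a2(2) lv by simp
  hence C12: "C1 \<subseteq> C2" using C_le m by blast
  have neq: "R2 \<noteq> C1" using lm1 m by blast
  have "\<not> C1 \<subseteq> R2"
  proof
    assume "C1 \<subseteq> R2"
    hence "C1 = R2" using card_subset_eq f lv a1 by metis
    thus False using neq by simp
  qed
  hence "R2 \<subset> R2 \<union> C1" by blast
  hence gt: "card R2 < card (R2 \<union> C1)" using f by (simp add: psubset_card_mono)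
  have u: "R2 \<union> C1 \<subseteq> C2" using C12 a2 by blast
  have "card (R2 \<union> C1) \<le> card C2" using u f by (simp add: card_mono)
  hence eq: "R2 \<union> C1 = C2" using u f card_subset_eq gt a2 by (metis Suc_leI le_antisym card_mono)
  have "z2 \<notin> R2"
  proof
    assume "z2 \<in> R2"
    hence "C2 = R2" using a2(1) by blast
    thus False using a2(2) by simp
  qed
  have "z2 \<in> C2" using a2(1) by blast
  hence "z2 \<in> C1" using eq \<open>z2 \<notin> R2\<close> by blast
  moreover have "z2 \<notin> R1" using \<open>z2 \<notin> R2\<close> R12 by blast
  ultimately show ?thesis using a1 by blast
qed

end

context tc begin

lemma ss_card1: "(\<forall>a\<in>A. \<forall>b\<in>A. a = b) \<Longrightarrow> \<exists>a. A \<subseteq> {a}" by blast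

lemma even_B:
  assumes cv: cov and k5: "5 \<le> card L" and noA: "\<And>R C z. \<not> Aed R C z"
    and nr: "{} \<notin> RR" "L \<notin> RR"
  shows "even (card L)"
proof -
  define k where "k = card L"
  define LB where "LB = {z. \<exists>R C. Bed R C z}"
  define TA where "TA = {z \<in> L. {z} \<in> RR}"
  define TB where "TB = {z \<in> L. L - {z} \<in> RR}"
  define T where "T = TA \<union> TB"
  have LBL: "LB \<subseteq> L" using Bed_label by (auto simp: LB_def)
  have finLB: "finite LB" using LBL fin finite_subset by blast
  have finT: "finite T" by (simp add: T_def TA_def TB_def fin)
  have cover: "L \<subseteq> LB \<union> T"
  proof
    fix w assume wL: "w \<in> L"
    obtain R C where RC: "R \<in> RR" "C \<in> CC" "sd R C = {w} \<or> sd R C = L - {w}"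
      using cv wL by (auto simp: cov_def)
    have ntR: "nt R" using nr RC by (auto simp: nt_def)
    show "w \<in> LB \<union> T"
    proof (cases "nt C")
      case True
      show ?thesis
      proof (cases "sd R C = {w}")
        case True thus ?thesis using RC ntR \<open>nt C\<close> by (auto simp: LB_def Bed_def)
      next
        case False hence "Aed R C w" using RC ntR \<open>nt C\<close> by (auto simp: Aed_def)
        thus ?thesis using noA by blast
      qed
    next
      case False
      hence "C = {} \<or> C = L" by (simp add: nt_def)
      hence "R = {w} \<or> R = L - {w}" using RC Rsub[OF RC(1)] wL unfolding sd_def by blast
      thus ?thesis using RC wL by (auto simp: T_def TA_def TB_def)
    qed
  qed
  obtain a where a: "TA \<subseteq> {a}"
    using ss_card1[of TA] sR_eq by (auto simp: TA_def)
  obtain b where b: "TB \<subseteq> {b}"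
    using ss_card1[of TB] coR_eq by (auto simp: TB_def)
  have cT: "card T \<le> 2"
  proof -
    have "T \<subseteq> {a,b}" using a b by (auto simp: T_def)
    hence "card T \<le> card {a,b}" by (simp add: card_mono)
    also have "\<dots> \<le> 2" by (simp add: card_insert_if)
    finally show ?thesis .
  qed
  define lvl where "lvl z = (SOME s. \<exists>R C. Bed R C z \<and> lev R C = s)" for z
  have lvl_ex: "\<exists>R C. Bed R C z \<and> lev R C = lvl z" if "z \<in> LB" for z
  proof -
    have "\<exists>s R C. Bed R C z \<and> lev R C = s" using that by (auto simp: LB_def)
    thus ?thesis unfolding lvl_def by (rule someI_ex)
  qed
  have inj: "inj_on lvl LB"
  proof
    fix z1 z2 assume z: "z1 \<in> LB" "z2 \<in> LB" "lvl z1 = lvl z2"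
    obtain R1 C1 where e1: "Bed R1 C1 z1" "lev R1 C1 = lvl z1" using lvl_ex z(1) by blast
    obtain R2 C2 where e2: "Bed R2 C2 z2" "lev R2 C2 = lvl z2" using lvl_ex z(2) by blast
    have lv: "lev R1 C1 = lev R2 C2" using e1(2) e2(2) z(3) by (simp only:)
    have eq: "R1 = R2 \<and> C1 = C2" using L1[OF e1(1) e2(1) lv] .
    have "sd R1 C1 = {z1}" "sd R2 C2 = {z2}" using e1(1) e2(1) by (simp_all add: Bed_def)
    hence "{z1} = {z2}" using eq by simp
    thus "z1 = z2" by simp
  qed
  have img: "lvl ` LB \<subseteq> {1..k-2}"
  proof
    fix s assume "s \<in> lvl ` LB"
    then obtain z where z: "z \<in> LB" "s = lvl z" by blast
    obtain R C where e: "Bed R C z" "lev R C = lvl z" using lvl_ex z(1) by blast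
    show "s \<in> {1..k-2}" using B_lev_range[OF e(1)] e(2) z(2) unfolding k_def by auto
  qed
  have cLB: "card LB \<le> k - 2"
    using card_inj_on_le[OF inj img] by simp
  have "k \<le> card (LB \<union> T)" unfolding k_def using cover finLB finT by (simp add: card_mono)
  moreover have "card (LB \<union> T) + card (LB \<inter> T) = card LB + card T"
    using finLB finT by (rule card_Un_Int[symmetric])
  moreover have "k \<ge> 5" using k5 k_def by simp
  ultimately have cLB2: "card LB = k - 2" and cT2: "card T = 2" and cI: "card (LB \<inter> T) = 0"
    using cLB cT by linarith+
  have disj: "LB \<inter> T = {}" using cI finLB by simp
  have imgeq: "lvl ` LB = {1..k-2}"
  proof (rule card_subset_eq)
    show "finite {1..k-2}" by simp
    show "lvl ` LB \<subseteq> {1..k-2}" by (rule img)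
    show "card (lvl ` LB) = card {1..k-2}" using card_image[OF inj] cLB2 by simp
  qed
  have lvl_unique: "lvl z = lev R C" if e: "Bed R C z" for R C z
  proof -
    have "lev R C \<in> {1..k-2}" using B_lev_range[OF e] unfolding k_def by auto
    then obtain z' where z': "z' \<in> LB" "lvl z' = lev R C" using imgeq by (metis imageE)
    obtain R' C' where e': "Bed R' C' z'" "lev R' C' = lvl z'" using lvl_ex z'(1) by blast
    have lv: "lev R C = lev R' C'" using e'(2) z'(2) by (simp only:)
    have eq: "R = R' \<and> C = C'" using L1[OF e e'(1) lv] .
    have "sd R C = {z}" "sd R' C' = {z'}" using e e'(1) by (simp_all add: Bed_def)
    hence "{z} = {z'}" using eq by simp
    thus ?thesis using z' by simp
  qed
  have exlev: "\<exists>R C z. Bed R C z \<and> lev R C = s" if "1 \<le> s" "s \<le> k - 2" for s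
  proof -
    have "s \<in> lvl ` LB" using imgeq that by simp
    then obtain z where z: "z \<in> LB" "lvl z = s" by blast
    thus ?thesis using lvl_ex[OF z(1)] by auto
  qed
  have TAne: "TA \<noteq> {}"
  proof
    assume "TA = {}"
    hence "T \<subseteq> {b}" using b by (simp add: T_def)
    hence "card T \<le> card {b}" using card_mono[of "{b}" T] by blast
    hence "card T \<le> 1" by simp
    thus False using cT2 by simp
  qed
  have TBne: "TB \<noteq> {}"
  proof
    assume "TB = {}"
    hence "T \<subseteq> {a}" using a by (simp add: T_def)
    hence "card T \<le> card {a}" using card_mono[of "{a}" T] by blast
    hence "card T \<le> 1" by simp
    thus False using cT2 by simp
  qed
  obtain w where w0: "w \<in> TA" using TAne by blast
  have w: "w \<in> L" "{w} \<in> RR" "w \<notin> LB"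
  proof -
    show "w \<in> L" "{w} \<in> RR" using w0 by (simp_all add: TA_def)
    have "w \<in> T" using w0 by (simp add: T_def)
    thus "w \<notin> LB" using disj by blast
  qed
  obtain t where t0: "t \<in> TB" using TBne by blast
  have t: "t \<in> L" "L - {t} \<in> RR" "t \<notin> LB"
  proof -
    show "t \<in> L" "L - {t} \<in> RR" using t0 by (simp_all add: TB_def)
    have "t \<in> T" using t0 by (simp add: T_def)
    thus "t \<notin> LB" using disj by blast
  qed
  define ori where "ori s = (\<exists>R C z. Bed R C z \<and> lev R C = s \<and> card C = Suc (card R))" for s
  have o1: "ori 1"
  proof -
    have "1 \<le> (1::nat)" "1 \<le> k - 2" using \<open>k \<ge> 5\<close> by auto
    then obtain R C z where e: "Bed R C z" "lev R C = 1" using exlev[of 1] by blast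
    have zLB: "z \<in> LB" using e by (auto simp: LB_def)
    have m: "R \<in> RR" "C \<in> CC" using e by (auto simp: Bed_def)
    from B_shape[OF e(1)] show ?thesis
    proof
      assume "z \<notin> R \<and> C = insert z R \<and> card C = Suc (card R)"
      thus ?thesis using e unfolding ori_def by blast
    next
      assume sh: "z \<notin> C \<and> R = insert z C \<and> card R = Suc (card C)"
      have crC: "card R = Suc (card C)" using sh by blast
      have "lev R C = card C" unfolding lev_def using crC by simp
      hence c1: "card C = 1" using e(2) by simp
      then obtain c where c: "C = {c}" by (auto simp: card_Suc_eq)
      have "card {w} \<le> card R" using crC by simp
      hence "{w} \<subseteq> R" using R_le w(2) m(1) by blast
      moreover have "w \<noteq> c" using lm1[OF w(2) m(2)] c by blast
      ultimately have "w = z" using sh c by blast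
      thus ?thesis using zLB w(3) by blast
    qed
  qed
  have ok: "\<not> ori (k - 2)"
  proof
    assume "ori (k - 2)"
    then obtain R C z where e: "Bed R C z" "lev R C = k - 2" "card C = Suc (card R)"
      unfolding ori_def by blast
    have zLB: "z \<in> LB" using e by (auto simp: LB_def)
    have m: "R \<in> RR" "C \<in> CC" using e by (auto simp: Bed_def)
    have cR: "card R = k - 2" using e(2,3) unfolding lev_def by simp
    have Ci: "C = insert z R" using B_shape[OF e(1)] e(3) by auto
    have ck1: "card (L - {t}) = k - 1" using card_co1 t(1) k_def by simp
    have "card R \<le> card (L - {t})" using cR ck1 by simp
    hence RLt: "R \<subseteq> L - {t}" using R_le m(1) t(2) by blast
    have "z = t"
    proof (rule ccontr)
      assume "z \<noteq> t"
      hence "C \<subseteq> L - {t}" using Ci RLt Bed_label[OF e(1)] by blast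
      moreover have "card C = card (L - {t})" using e(3) cR ck1 \<open>k \<ge> 5\<close> by simp
      ultimately have "C = L - {t}" using card_subset_eq fin by (metis finite_Diff)
      thus False using lm1[OF t(2) m(2)] by simp
    qed
    thus False using zLB t(3) by simp
  qed
  have alt: "ori s \<longleftrightarrow> \<not> ori (Suc s)" if s: "1 \<le> s" "Suc s \<le> k - 2" for s
  proof -
    have s1: "s \<le> k - 2" using s by simp
    obtain R1 C1 z1 where e1: "Bed R1 C1 z1" "lev R1 C1 = s" using exlev[OF s(1) s1] by blast
    have s2: "1 \<le> Suc s" by simp
    obtain R2 C2 z2 where e2: "Bed R2 C2 z2" "lev R2 C2 = Suc s" using exlev[OF s2 s(2)] by blast
    have z12: "z1 \<noteq> z2" using lvl_unique[OF e1(1)] lvl_unique[OF e2(1)] e1(2) e2(2) by auto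
    have os: "ori s \<longleftrightarrow> card C1 = Suc (card R1)"
    proof
      assume "ori s"
      then obtain R C z where e: "Bed R C z" "lev R C = s" "card C = Suc (card R)" unfolding ori_def by blast
      have "R = R1 \<and> C = C1" using L1[OF e(1) e1(1)] e(2) e1(2) by simp
      thus "card C1 = Suc (card R1)" using e(3) by simp
    next
      assume "card C1 = Suc (card R1)" thus "ori s" using e1 unfolding ori_def by blast
    qed
    have os2: "ori (Suc s) \<longleftrightarrow> card C2 = Suc (card R2)"
    proof
      assume "ori (Suc s)"
      then obtain R C z where e: "Bed R C z" "lev R C = Suc s" "card C = Suc (card R)" unfolding ori_def by blast
      have "R = R2 \<and> C = C2" using L1[OF e(1) e2(1)] e(2) e2(2) by simp
      thus "card C2 = Suc (card R2)" using e(3) by simp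
    next
      assume "card C2 = Suc (card R2)" thus "ori (Suc s)" using e2 unfolding ori_def by blast
    qed
    have sh1: "(z1 \<notin> R1 \<and> C1 = insert z1 R1 \<and> card C1 = Suc (card R1)) \<or> (z1 \<notin> C1 \<and> R1 = insert z1 C1 \<and> card R1 = Suc (card C1))"
      by (rule B_shape[OF e1(1)])
    have sh2: "(z2 \<notin> R2 \<and> C2 = insert z2 R2 \<and> card C2 = Suc (card R2)) \<or> (z2 \<notin> C2 \<and> R2 = insert z2 C2 \<and> card R2 = Suc (card C2))"
      by (rule B_shape[OF e2(1)])
    show ?thesis
    proof
      assume "ori s"
      hence r1: "card C1 = Suc (card R1)" "C1 = insert z1 R1" using os sh1 by auto
      show "\<not> ori (Suc s)"
      proof
        assume "ori (Suc s)"
        hence r2: "card C2 = Suc (card R2)" "C2 = insert z2 R2" using os2 sh2 by auto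
        have "card R1 = s" "card R2 = Suc s" using r1 r2 e1(2) e2(2) unfolding lev_def by auto
        hence "z1 = z2" using alt_row[OF e1(1) e2(1) r1(2,1) r2(2,1)] by simp
        thus False using z12 by simp
      qed
    next
      assume "\<not> ori (Suc s)"
      hence r2: "card R2 = Suc (card C2)" "R2 = insert z2 C2" using os2 sh2 by auto
      show "ori s"
      proof (rule ccontr)
        assume "\<not> ori s"
        hence r1: "card R1 = Suc (card C1)" "R1 = insert z1 C1" using os sh1 by auto
        have cc: "card C1 = s" "card C2 = Suc s" using r1 r2 e1(2) e2(2) unfolding lev_def by auto
        interpret S: tc L CC RR by (rule swap)
        have "z1 = z2" using S.alt_row[OF Bed_swap[OF e1(1)] Bed_swap[OF e2(1)] r1(2,1) r2(2,1)] cc by simp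
        thus False using z12 by simp
      qed
    qed
  qed
  have par: "ori s \<longleftrightarrow> odd s" if "1 \<le> s" "s \<le> k - 2" for s
    using that
  proof (induction s)
    case 0 thus ?case by simp
  next
    case (Suc s)
    show ?case
    proof (cases "s = 0")
      case True thus ?thesis using o1 by simp
    next
      case False
      hence "1 \<le> s" by simp
      have ih: "ori s \<longleftrightarrow> odd s" using Suc.IH \<open>1 \<le> s\<close> Suc.prems by simp
      have "ori s \<longleftrightarrow> \<not> ori (Suc s)" using alt[OF \<open>1 \<le> s\<close>] Suc.prems by simp
      thus ?thesis using ih by simp
    qed
  qed
  have "\<not> odd (k - 2)" using par[of "k - 2"] ok \<open>k \<ge> 5\<close> by simp
  hence "even k" using \<open>k \<ge> 5\<close> by simp
  thus ?thesis unfolding k_def .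
qed

end

context tc begin

lemma even_noR:
  assumes cv: cov and k5: "5 \<le> card L" and nr: "{} \<notin> RR" "L \<notin> RR"
  shows "even (card L)"
proof (cases "\<exists>R C z. Aed R C z")
  case False
  thus ?thesis using even_B[OF cv k5 _ nr] by blast
next
  case True
  then obtain R0 C0 z0 where a0: "Aed R0 C0 z0" by blast
  have noB: "\<not> Bed R C z" for R C z
    using step1[OF cv k5 _ a0] by blast
  interpret U: tc L RR "(-) L ` CC" by (rule ccol)
  have noA': "\<not> U.Aed R C z" for R C z
  proof
    assume a: "U.Aed R C z"
    have zL: "z \<in> L" using U.Aed_label[OF a] .
    from a have m: "R \<in> RR" "C \<in> (-) L ` CC" "U.nt R" "U.nt C" "sd R C = L - {z}"
      by (auto simp: U.Aed_def)
    then obtain C1 where c1: "C1 \<in> CC" "C = L - C1" by blast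
    have s: "R \<subseteq> L" "C1 \<subseteq> L" using m c1 Rsub Csub by auto
    have "sd R C = L - sd R C1" using sd_compl1[OF s] c1 by simp
    hence "sd R C1 = {z}" using m(5) s zL unfolding sd_def by blast
    moreover have "nt R" "nt C1" using m(3,4) c1 s unfolding U.nt_def nt_def by auto
    ultimately have "Bed R C1 z" using m(1) c1(1) by (simp add: Bed_def)
    thus False using noB by blast
  qed
  show ?thesis using U.even_B[OF cov_ccol[OF cv] k5 noA' nr] .
qed

lemma even_main:
  assumes cv: cov and k5: "5 \<le> card L"
  shows "even (card L)"
proof (cases "{} \<in> RR \<or> L \<in> RR")
  case False
  thus ?thesis using even_noR[OF cv k5] by blast
next
  case True
  hence nc: "{} \<notin> CC" "L \<notin> CC" using triv_excl by blast+
  interpret S: tc L CC RR by (rule swap)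
  show ?thesis using S.even_noR[OF cov_swap[OF cv] k5 nc] .
qed

definition E where "E R = {x \<in> L. \<exists>C\<in>CC. sd R C = {x} \<or> sd R C = L - {x}}"

lemma E_le2:
  assumes R: "R \<in> RR" and k4: "4 \<le> card L"
  shows "card (E R) \<le> 2"
proof -
  have RL: "R \<subseteq> L" using Rsub R by blast
  have fR: "finite R" using finR R .
  define P1 where "P1 = {x \<in> R. R - {x} \<in> CC}"
  define P2 where "P2 = {x \<in> L - R. insert x R \<in> CC}"
  define P3 where "P3 = {x \<in> L - R. (L - R) - {x} \<in> CC}"
  define P4 where "P4 = {x \<in> R. insert x (L - R) \<in> CC}"
  have cover: "E R \<subseteq> P1 \<union> P2 \<union> P3 \<union> P4"
  proof
    fix x assume "x \<in> E R"
    then obtain C where C: "C \<in> CC" "sd R C = {x} \<or> sd R C = L - {x}" and xL: "x \<in> L"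
      unfolding E_def by blast
    have CL: "C \<subseteq> L" using Csub C(1) by blast
    from C(2) show "x \<in> P1 \<union> P2 \<union> P3 \<union> P4"
    proof
      assume sd1: "sd R C = {x}"
      hence h1: "x \<in> R \<longleftrightarrow> x \<notin> C" and h2: "\<And>w. w \<noteq> x \<Longrightarrow> (w \<in> R \<longleftrightarrow> w \<in> C)"
        by (auto simp: sd_single_iff)
      show ?thesis
      proof (cases "x \<in> R")
        case True
        have "C = R - {x}"
        proof (rule set_eqI)
          fix w show "w \<in> C \<longleftrightarrow> w \<in> R - {x}" by (cases "w = x") (use True h1 h2 in auto)
        qed
        thus ?thesis using True C(1) by (simp add: P1_def)
      next
        case False
        have "C = insert x R"
        proof (rule set_eqI)
          fix w show "w \<in> C \<longleftrightarrow> w \<in> insert x R" by (cases "w = x") (use False h1 h2 in auto)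
        qed
        thus ?thesis using False C(1) xL by (simp add: P2_def)
      qed
    next
      assume sd2: "sd R C = L - {x}"
      have h1: "x \<in> R \<longleftrightarrow> x \<in> C" and h2: "\<And>w. w \<in> L \<Longrightarrow> w \<noteq> x \<Longrightarrow> (w \<in> R \<longleftrightarrow> w \<notin> C)"
        using sd_co_iff[OF RL CL, of x] sd2 by blast+
      show ?thesis
      proof (cases "x \<in> R")
        case True
        have "C = insert x (L - R)"
        proof (rule set_eqI)
          fix w show "w \<in> C \<longleftrightarrow> w \<in> insert x (L - R)"
            by (cases "w = x") (use True h1 h2 CL in auto)
        qed
        thus ?thesis using True C(1) by (simp add: P4_def)
      next
        case False
        have "C = (L - R) - {x}"
        proof (rule set_eqI)
          fix w show "w \<in> C \<longleftrightarrow> w \<in> (L - R) - {x}"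
            by (cases "w = x") (use False h1 h2 CL in auto)
        qed
        thus ?thesis using False C(1) xL by (simp add: P3_def)
      qed
    qed
  qed
  have fLR: "finite (L - R)" using fin by simp
  have ss1: "\<exists>a. P1 \<subseteq> {a}"
  proof (rule ss_ex, intro ballI)
    fix a b assume ab: "a \<in> P1" "b \<in> P1"
    have "card (R - {a}) = card (R - {b})" using ab fR by (simp add: P1_def)
    hence "R - {a} = R - {b}" using C_eq ab by (simp add: P1_def)
    thus "a = b" using ab by (auto simp: P1_def)
  qed
  have ss2: "\<exists>a. P2 \<subseteq> {a}"
  proof (rule ss_ex, intro ballI)
    fix a b assume ab: "a \<in> P2" "b \<in> P2"
    have "card (insert a R) = card (insert b R)" using ab fR by (simp add: P2_def)
    hence "insert a R = insert b R" using C_eq ab by (simp add: P2_def)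
    thus "a = b" using ab by (auto simp: P2_def)
  qed
  have ss3: "\<exists>a. P3 \<subseteq> {a}"
  proof (rule ss_ex, intro ballI)
    fix a b assume ab: "a \<in> P3" "b \<in> P3"
    have "card ((L - R) - {a}) = card ((L - R) - {b})" using ab fLR by (simp add: P3_def)
    hence "(L - R) - {a} = (L - R) - {b}" using C_eq ab by (simp add: P3_def)
    thus "a = b" using ab by (auto simp: P3_def)
  qed
  have ss4: "\<exists>a. P4 \<subseteq> {a}"
  proof (rule ss_ex, intro ballI)
    fix a b assume ab: "a \<in> P4" "b \<in> P4"
    have "card (insert a (L - R)) = card (insert b (L - R))" using ab fLR by (simp add: P4_def)
    hence "insert a (L - R) = insert b (L - R)" using C_eq ab by (simp add: P4_def)
    thus "a = b" using ab by (auto simp: P4_def)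
  qed
  obtain p1 where p1: "P1 \<subseteq> {p1}" using ss1 by blast
  obtain p2 where p2: "P2 \<subseteq> {p2}" using ss2 by blast
  obtain p3 where p3: "P3 \<subseteq> {p3}" using ss3 by blast
  obtain p4 where p4: "P4 \<subseteq> {p4}" using ss4 by blast
  have sP: "P1 \<subseteq> R" "P4 \<subseteq> R" "P2 \<subseteq> L - R" "P3 \<subseteq> L - R"
    by (auto simp: P1_def P2_def P3_def P4_def)
  have card3: False if "L \<subseteq> {a,b,c}" for a b c
  proof -
    have "card L \<le> card {a,b,c}" using that by (simp add: card_mono)
    also have "\<dots> \<le> 3" by (simp add: card_insert_if)
    finally show False using k4 by simp
  qed
  have r13: "R - {x1} = {} \<or> (L - R) - {x3} = {}" if "x1 \<in> P1" "x3 \<in> P3" for x1 x3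
  proof -
    have m: "R - {x1} \<in> CC" "(L - R) - {x3} \<in> CC" using that by (auto simp: P1_def P3_def)
    from C_cmp[OF m] show ?thesis by blast
  qed
  have r14: "R \<subseteq> {x1,x4} \<or> L - R = {}" if "x1 \<in> P1" "x4 \<in> P4" for x1 x4
  proof -
    have m: "R - {x1} \<in> CC" "insert x4 (L - R) \<in> CC" using that by (auto simp: P1_def P4_def)
    from C_cmp[OF m] show ?thesis by blast
  qed
  have r23: "R = {} \<or> L - R \<subseteq> {x3,y2}" if "y2 \<in> P2" "x3 \<in> P3" for y2 x3
  proof -
    have m: "insert y2 R \<in> CC" "(L - R) - {x3} \<in> CC" and y: "y2 \<notin> R" using that by (auto simp: P2_def P3_def)
    from C_cmp[OF m] show ?thesis using y by blast
  qed
  have r24: "R \<subseteq> {x4} \<or> L - R \<subseteq> {y2}" if "y2 \<in> P2" "x4 \<in> P4" for y2 x4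
  proof -
    have m: "insert y2 R \<in> CC" "insert x4 (L - R) \<in> CC" and y: "y2 \<notin> R" "x4 \<in> R" using that by (auto simp: P2_def P4_def)
    from C_cmp[OF m] show ?thesis using y by blast
  qed
  have "\<exists>u v. E R \<subseteq> {u,v}"
  proof (cases "P3 \<union> P4 = {}")
    case True
    hence "E R \<subseteq> {p1,p2}" using cover p1 p2 by blast
    thus ?thesis by blast
  next
    case F34: False
    show ?thesis
    proof (cases "P1 \<union> P2 = {}")
      case True
      hence "E R \<subseteq> {p3,p4}" using cover p3 p4 by blast
      thus ?thesis by blast
    next
      case F12: False
      show ?thesis
      proof (cases "P1 = {}")
        case False
        then obtain x1 where x1: "x1 \<in> P1" by blast
        show ?thesis
        proof (cases "P3 = {}")
          case False
          then obtain x3 where x3: "x3 \<in> P3" by blast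
          from r13[OF x1 x3] show ?thesis
          proof
            assume "R - {x1} = {}"
            hence Rx: "R \<subseteq> {x1}" by blast
            have "P2 = {}"
            proof (rule ccontr)
              assume "P2 \<noteq> {}"
              then obtain y2 where y2: "y2 \<in> P2" by blast
              from r23[OF y2 x3] show False
              proof
                assume "R = {}" thus False using x1 sP by blast
              next
                assume "L - R \<subseteq> {x3,y2}"
                hence "L \<subseteq> {x1,x3,y2}" using Rx by blast
                thus False by (rule card3)
              qed
            qed
            hence "E R \<subseteq> {x1,p3}" using cover sP Rx p3 by blast
            thus ?thesis by blast
          next
            assume "(L - R) - {x3} = {}"
            hence LRx: "L - R \<subseteq> {x3}" by blast
            have "P4 = {}"
            proof (rule ccontr)
              assume "P4 \<noteq> {}"
              then obtain x4 where x4: "x4 \<in> P4" by blast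
              from r14[OF x1 x4] show False
              proof
                assume "R \<subseteq> {x1,x4}"
                hence "L \<subseteq> {x1,x4,x3}" using LRx by blast
                thus False by (rule card3)
              next
                assume "L - R = {}" thus False using x3 sP by blast
              qed
            qed
            hence "E R \<subseteq> {p1,x3}" using cover sP LRx p1 by blast
            thus ?thesis by blast
          qed
        next
          case True
          hence "P4 \<noteq> {}" using F34 by blast
          then obtain x4 where x4: "x4 \<in> P4" by blast
          from r14[OF x1 x4] show ?thesis
          proof
            assume Rx: "R \<subseteq> {x1,x4}"
            show ?thesis
            proof (cases "P2 = {}")
              case True
              hence "E R \<subseteq> {x1,x4}" using cover sP Rx \<open>P3 = {}\<close> by blast
              thus ?thesis by blast
            next
              case False
              then obtain y2 where y2: "y2 \<in> P2" by blast
              from r24[OF y2 x4] show ?thesis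
              proof
                assume "R \<subseteq> {x4}"
                hence "E R \<subseteq> {x4,p2}" using cover sP p2 \<open>P3 = {}\<close> by blast
                thus ?thesis by blast
              next
                assume "L - R \<subseteq> {y2}"
                hence "L \<subseteq> {x1,x4,y2}" using Rx by blast
                thus ?thesis using card3 by blast
              qed
            qed
          next
            assume "L - R = {}"
            hence "E R \<subseteq> {p1,p4}" using cover sP p1 p4 by blast
            thus ?thesis by blast
          qed
        qed
      next
        case True
        hence "P2 \<noteq> {}" using F12 by blast
        then obtain y2 where y2: "y2 \<in> P2" by blast
        show ?thesis
        proof (cases "P3 = {}")
          case False
          then obtain x3 where x3: "x3 \<in> P3" by blast
          from r23[OF y2 x3] show ?thesis
          proof
            assume "R = {}"
            hence "E R \<subseteq> {p2,p3}" using cover sP p2 p3 by blast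
            thus ?thesis by blast
          next
            assume LRs: "L - R \<subseteq> {x3,y2}"
            show ?thesis
            proof (cases "P4 = {}")
              case True
              hence "E R \<subseteq> {x3,y2}" using cover sP LRs \<open>P1 = {}\<close> by blast
              thus ?thesis by blast
            next
              case False
              then obtain x4 where x4: "x4 \<in> P4" by blast
              from r24[OF y2 x4] show ?thesis
              proof
                assume "R \<subseteq> {x4}"
                hence "L \<subseteq> {x4,x3,y2}" using LRs by blast
                thus ?thesis using card3 by blast
              next
                assume "L - R \<subseteq> {y2}"
                hence "E R \<subseteq> {p4,y2}" using cover sP p4 \<open>P1 = {}\<close> by blast
                thus ?thesis by blast
              qed
            qed
          qed
        next
          case True
          hence "E R \<subseteq> {p2,p4}" using cover p2 p4 \<open>P1 = {}\<close> by blast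
          thus ?thesis by blast
        qed
      qed
    qed
  qed
  then obtain u v where "E R \<subseteq> {u,v}" by blast
  hence "card (E R) \<le> card {u,v}" by (simp add: card_mono)
  also have "\<dots> \<le> 2" by (simp add: card_insert_if)
  finally show ?thesis .
qed

lemma bound_R:
  assumes cv: cov and k4: "4 \<le> card L"
  shows "card L \<le> 2 * card RR"
proof -
  have finRR: "finite RR"
  proof -
    have "RR \<subseteq> Pow L" using Rsub by blast
    thus ?thesis using fin finite_subset by blast
  qed
  have "L \<subseteq> (\<Union>R\<in>RR. E R)"
  proof
    fix x assume x: "x \<in> L"
    then obtain R C where "R \<in> RR" "C \<in> CC" "sd R C = {x} \<or> sd R C = L - {x}"
      using cv unfolding cov_def by blast
    thus "x \<in> (\<Union>R\<in>RR. E R)" using x unfolding E_def by blast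
  qed
  hence "card L \<le> card (\<Union>R\<in>RR. E R)"
    using finRR by (intro card_mono) (auto simp: E_def intro: finite_subset[OF _ fin])
  also have "\<dots> \<le> (\<Sum>R\<in>RR. card (E R))" using finRR by (rule card_UN_le)
  also have "\<dots> \<le> (\<Sum>R\<in>RR. 2)" using E_le2 k4 by (intro sum_mono) blast
  also have "\<dots> = 2 * card RR" by simp
  finally show ?thesis .
qed

lemma bound_C:
  assumes cv: cov and k4: "4 \<le> card L"
  shows "card L \<le> 2 * card CC"
proof -
  interpret S: tc L CC RR by (rule swap)
  show ?thesis using S.bound_R[OF cov_swap[OF cv] k4] .
qed

end

lemma sepA:
  fixes i1 i2 j1 j2 a b t :: int
  assumes "i1 < i2" "j1 < j2" "i2 - i1 \<le> j2 - j1"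
    "2*t \<ge> (i2-i1) + (j2 - j1)" "2*t \<le> (i2 - i1) + (j2 - j1) + 1"
    "(a \<le> i1) = (b \<le> j1 + t - 1)"
  shows "\<bar>a - i1\<bar> + \<bar>b - j1\<bar> \<noteq> \<bar>a - i2\<bar> + \<bar>b - j2\<bar>"
  using assms by (cases "a \<le> i1"; cases "a \<le> i2"; cases "b \<le> j1"; cases "b \<le> j2") linarith+

lemma sep_same:
  fixes b j1 j2 :: int
  assumes "\<bar>b - j1\<bar> = \<bar>b - j2\<bar>"
  shows "j1 = j2 \<or> 2*b = j1 + j2"
  using assms by (cases "b \<le> j1"; cases "b \<le> j2") linarith+

definition Dsep :: "int \<Rightarrow> int \<Rightarrow> int \<Rightarrow> int \<Rightarrow> int \<Rightarrow> int \<Rightarrow> bool" where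
  "Dsep i1 j1 i2 j2 a b \<longleftrightarrow> \<bar>a - i1\<bar> + \<bar>b - j1\<bar> \<noteq> \<bar>a - i2\<bar> + \<bar>b - j2\<bar>"

definition PLa :: "int \<Rightarrow> int \<Rightarrow> (int \<Rightarrow> int \<Rightarrow> bool) \<Rightarrow> bool" where
  "PLa m n D \<longleftrightarrow> (\<exists>i j. 1 \<le> i \<and> i < m \<and> 1 \<le> j \<and> j < n \<and>
       ((\<forall>a b. (a \<le> i) = (b \<le> j) \<longrightarrow> D a b) \<or> (\<forall>a b. (a \<le> i) \<noteq> (b \<le> j) \<longrightarrow> D a b)))"
definition PLr :: "int \<Rightarrow> (int \<Rightarrow> int \<Rightarrow> bool) \<Rightarrow> bool" where
  "PLr m D \<longleftrightarrow> (\<exists>r. 1 < r \<and> r < m \<and> (\<forall>a b. a \<noteq> r \<longrightarrow> D a b))"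
definition PLc :: "int \<Rightarrow> (int \<Rightarrow> int \<Rightarrow> bool) \<Rightarrow> bool" where
  "PLc n D \<longleftrightarrow> (\<exists>c. 1 < c \<and> c < n \<and> (\<forall>a b. b \<noteq> c \<longrightarrow> D a b))"
definition PLconc :: "int \<Rightarrow> int \<Rightarrow> (int \<Rightarrow> int \<Rightarrow> bool) \<Rightarrow> bool" where
  "PLconc m n D \<longleftrightarrow> PLa m n D \<or> PLr m D \<or> PLc n D"

lemma PLa_swap: "PLa m n (\<lambda>a b. D b a) \<Longrightarrow> PLa n m D"
proof -
  assume "PLa m n (\<lambda>a b. D b a)"
  then obtain i j where a: "1 \<le> i" "i < m" "1 \<le> j" "j < n"
      and d: "(\<forall>a b. (a \<le> i) = (b \<le> j) \<longrightarrow> D b a) \<or> (\<forall>a b. (a \<le> i) \<noteq> (b \<le> j) \<longrightarrow> D b a)"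
    unfolding PLa_def by blast
  have "(\<forall>a b. (a \<le> j) = (b \<le> i) \<longrightarrow> D a b) \<or> (\<forall>a b. (a \<le> j) \<noteq> (b \<le> i) \<longrightarrow> D a b)"
  proof (rule disjE[OF d])
    assume h: "\<forall>a b. (a \<le> i) = (b \<le> j) \<longrightarrow> D b a"
    have "\<forall>a b. (a \<le> j) = (b \<le> i) \<longrightarrow> D a b"
    proof (intro allI impI)
      fix a b assume "(a \<le> j) = (b \<le> i)"
      thus "D a b" using h[rule_format, of b a] by simp
    qed
    thus ?thesis by blast
  next
    assume h: "\<forall>a b. (a \<le> i) \<noteq> (b \<le> j) \<longrightarrow> D b a"
    have "\<forall>a b. (a \<le> j) \<noteq> (b \<le> i) \<longrightarrow> D a b"
    proof (intro allI impI)
      fix a b assume "(a \<le> j) \<noteq> (b \<le> i)"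
      thus "D a b" using h[rule_format, of b a] by simp
    qed
    thus ?thesis by blast
  qed
  thus ?thesis unfolding PLa_def using a by blast
qed

lemma PLr_swap: "PLr m (\<lambda>a b. D b a) \<Longrightarrow> PLc m D"
  unfolding PLr_def PLc_def by blast
lemma PLc_swap: "PLc n (\<lambda>a b. D b a) \<Longrightarrow> PLr n D"
  unfolding PLr_def PLc_def by blast

lemma PLconc_swap: "PLconc m n (\<lambda>a b. D b a) \<Longrightarrow> PLconc n m D"
  unfolding PLconc_def using PLa_swap PLr_swap PLc_swap by blast

lemma PL_samerow:
  fixes i1 j1 j2 m n :: int
  assumes "j1 < j2" "1 \<le> j1" "j2 \<le> n" "2 \<le> m" "2 \<le> n"
  shows "PLconc m n (Dsep i1 j1 i1 j2)"
proof (cases "even (j1 + j2)")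
  case True
  from True obtain c where c: "j1 + j2 = 2 * c" by (rule evenE)
  have "1 < c \<and> c < n \<and> (\<forall>a b. b \<noteq> c \<longrightarrow> Dsep i1 j1 i1 j2 a b)"
  proof (intro conjI allI impI)
    show "1 < c" "c < n" using c assms by linarith+
    fix a b assume "b \<noteq> c"
    show "Dsep i1 j1 i1 j2 a b"
      unfolding Dsep_def
    proof
      assume "\<bar>a - i1\<bar> + \<bar>b - j1\<bar> = \<bar>a - i1\<bar> + \<bar>b - j2\<bar>"
      hence "\<bar>b - j1\<bar> = \<bar>b - j2\<bar>" by simp
      from sep_same[OF this] show False using c \<open>b \<noteq> c\<close> assms(1) by linarith
    qed
  qed
  thus ?thesis unfolding PLconc_def PLc_def by blast
next
  case False
  have all: "Dsep i1 j1 i1 j2 a b" for a b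
    unfolding Dsep_def
  proof
    assume "\<bar>a - i1\<bar> + \<bar>b - j1\<bar> = \<bar>a - i1\<bar> + \<bar>b - j2\<bar>"
    hence "\<bar>b - j1\<bar> = \<bar>b - j2\<bar>" by simp
    from sep_same[OF this] have "j1 = j2 \<or> 2 * b = j1 + j2" .
    thus False
    proof
      assume "j1 = j2" thus False using assms(1) by simp
    next
      assume "2 * b = j1 + j2"
      hence "even (j1 + j2)" by (metis dvd_triv_left)
      thus False using False by simp
    qed
  qed
  have "1 \<le> (1::int) \<and> 1 < m \<and> 1 \<le> (1::int) \<and> 1 < n" using assms by simp
  thus ?thesis unfolding PLconc_def PLa_def using all by blast
qed

lemma Dsep_swap: "Dsep i1 j1 i2 j2 a b = Dsep j1 i1 j2 i2 b a"
  unfolding Dsep_def by (simp add: add.commute)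

lemma Dsep_sym: "Dsep i1 j1 i2 j2 a b = Dsep i2 j2 i1 j1 a b"
  unfolding Dsep_def by auto

lemma PL_samecol:
  fixes i1 i2 j1 m n :: int
  assumes "i1 < i2" "1 \<le> i1" "i2 \<le> m" "2 \<le> m" "2 \<le> n"
  shows "PLconc m n (Dsep i1 j1 i2 j1)"
proof -
  have "PLconc n m (Dsep j1 i1 j1 i2)" using PL_samerow[of i1 i2 m n j1] assms by simp
  moreover have "Dsep j1 i1 j1 i2 = (\<lambda>a b. Dsep i1 j1 i2 j1 b a)"
    using Dsep_swap by (intro ext) metis
  ultimately have "PLconc n m (\<lambda>a b. Dsep i1 j1 i2 j1 b a)" by simp
  thus ?thesis by (rule PLconc_swap)
qed

lemma PL_diag:
  fixes i1 i2 j1 j2 m n :: int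
  assumes "i1 < i2" "j1 < j2" "1 \<le> i1" "1 \<le> j1" "i2 \<le> m" "j2 \<le> n" "i2 - i1 \<le> j2 - j1"
  shows "PLconc m n (Dsep i1 j1 i2 j2)"
proof -
  define t where "t = ((i2 - i1) + (j2 - j1) + 1) div 2"
  have t1: "2*t \<ge> (i2-i1) + (j2 - j1)" "2*t \<le> (i2 - i1) + (j2 - j1) + 1" unfolding t_def by linarith+
  have key: "\<forall>a b. (a \<le> i1) = (b \<le> j1 + t - 1) \<longrightarrow> Dsep i1 j1 i2 j2 a b"
  proof (intro allI impI)
    fix a b assume "(a \<le> i1) = (b \<le> j1 + t - 1)"
    from sepA[OF assms(1,2,7) t1 this] show "Dsep i1 j1 i2 j2 a b" unfolding Dsep_def .
  qed
  have "1 \<le> i1 \<and> i1 < m \<and> 1 \<le> j1 + t - 1 \<and> j1 + t - 1 < n" using assms t1 by linarith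
  thus ?thesis unfolding PLconc_def PLa_def using key by blast
qed

lemma PL_anti:
  fixes i1 i2 j1 j2 m n :: int
  assumes "i1 < i2" "j2 < j1" "1 \<le> i1" "1 \<le> j2" "i2 \<le> m" "j1 \<le> n" "i2 - i1 \<le> j1 - j2"
  shows "PLconc m n (Dsep i1 j1 i2 j2)"
proof -
  define t where "t = ((i2 - i1) + (j1 - j2) + 1) div 2"
  have t1: "2*t \<ge> (i2-i1) + (-j2 - -j1)" "2*t \<le> (i2 - i1) + (-j2 - -j1) + 1" unfolding t_def by linarith+
  have a3: "i2 - i1 \<le> -j2 - -j1" using assms by simp
  have a2: "-j1 < -j2" using assms by simp
  have key: "\<forall>a b. (a \<le> i1) \<noteq> (b \<le> j1 - t) \<longrightarrow> Dsep i1 j1 i2 j2 a b"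
  proof (intro allI impI)
    fix a b assume "(a \<le> i1) \<noteq> (b \<le> j1 - t)"
    hence "(a \<le> i1) = (-b \<le> -j1 + t - 1)" by linarith
    from sepA[OF assms(1) a2 a3 t1 this]
    have "\<bar>a - i1\<bar> + \<bar>- b - - j1\<bar> \<noteq> \<bar>a - i2\<bar> + \<bar>- b - - j2\<bar>" .
    moreover have "\<bar>- b - - j1\<bar> = \<bar>b - j1\<bar>" "\<bar>- b - - j2\<bar> = \<bar>b - j2\<bar>" by linarith+
    ultimately show "Dsep i1 j1 i2 j2 a b" unfolding Dsep_def by simp
  qed
  have "1 \<le> i1 \<and> i1 < m \<and> 1 \<le> j1 - t \<and> j1 - t < n" using assms t1 by linarith
  thus ?thesis unfolding PLconc_def PLa_def using key by blast
qed

lemma PL_gen: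
  fixes i1 i2 j1 j2 m n :: int
  assumes "(i1, j1) \<noteq> (i2, j2)" "1 \<le> i1" "1 \<le> i2" "1 \<le> j1" "1 \<le> j2"
    "i1 \<le> m" "i2 \<le> m" "j1 \<le> n" "j2 \<le> n" "2 \<le> m" "2 \<le> n"
  shows "PLconc m n (Dsep i1 j1 i2 j2)"
proof -
  have wlog: "PLconc m n (Dsep i1 j1 i2 j2)" if
    h: "(i1, j1) \<noteq> (i2, j2)" "1 \<le> i1" "1 \<le> i2" "1 \<le> j1" "1 \<le> j2"
    "i1 \<le> m" "i2 \<le> m" "j1 \<le> n" "j2 \<le> n" "i1 \<le> i2" for i1 i2 j1 j2
  proof (cases "i1 = i2")
    case True
    hence "j1 \<noteq> j2" using h by simp
    show ?thesis
    proof (cases "j1 < j2")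
      case True
      thus ?thesis using PL_samerow[of j1 j2 n m i1] \<open>i1 = i2\<close> h assms(10,11) by simp
    next
      case False
      hence "j2 < j1" using \<open>j1 \<noteq> j2\<close> by simp
      hence "PLconc m n (Dsep i1 j2 i1 j1)" using PL_samerow[of j2 j1 n m i1] h assms(10,11) by simp
      moreover have "Dsep i1 j2 i1 j1 = Dsep i1 j1 i2 j2" using Dsep_sym \<open>i1 = i2\<close> by (intro ext) metis
      ultimately show ?thesis by simp
    qed
  next
    case False
    hence lt: "i1 < i2" using h by simp
    show ?thesis
    proof (cases "j1 = j2")
      case True
      thus ?thesis using PL_samecol[OF lt] h assms(10,11) by simp
    next
      case False
      show ?thesis
      proof (cases "j1 < j2")
        case True
        show ?thesis
        proof (cases "i2 - i1 \<le> j2 - j1")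
          case True
          thus ?thesis using PL_diag[OF lt \<open>j1 < j2\<close>] h by simp
        next
          case False
          hence "j2 - j1 \<le> i2 - i1" by simp
          hence "PLconc n m (Dsep j1 i1 j2 i2)" using PL_diag[OF \<open>j1 < j2\<close> lt] h by simp
          moreover have "Dsep j1 i1 j2 i2 = (\<lambda>a b. Dsep i1 j1 i2 j2 b a)"
            using Dsep_swap by (intro ext) metis
          ultimately have "PLconc n m (\<lambda>a b. Dsep i1 j1 i2 j2 b a)" by simp
          thus ?thesis by (rule PLconc_swap)
        qed
      next
        case False
        hence j21: "j2 < j1" using \<open>j1 \<noteq> j2\<close> by simp
        show ?thesis
        proof (cases "i2 - i1 \<le> j1 - j2")
          case True
          thus ?thesis using PL_anti[OF lt j21] h by simp
        next
          case False
          hence "j1 - j2 \<le> i2 - i1" by simp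
          hence "PLconc n m (Dsep j2 i2 j1 i1)" using PL_anti[OF j21 lt] h by simp
          moreover have "Dsep j2 i2 j1 i1 = (\<lambda>a b. Dsep i1 j1 i2 j2 b a)"
            using Dsep_swap Dsep_sym by (intro ext) metis
          ultimately have "PLconc n m (\<lambda>a b. Dsep i1 j1 i2 j2 b a)" by simp
          thus ?thesis by (rule PLconc_swap)
        qed
      qed
    qed
  qed
  show ?thesis
  proof (cases "i1 \<le> i2")
    case True
    thus ?thesis using wlog assms by blast
  next
    case False
    hence "PLconc m n (Dsep i2 j2 i1 j1)" using wlog[of i2 j2 i1 j1] assms by auto
    moreover have "Dsep i2 j2 i1 j1 = Dsep i1 j1 i2 j2" using Dsep_sym by (intro ext) metis
    ultimately show ?thesis by simp
  qed
qed

lemma sep_int: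
  "separates w u v \<longleftrightarrow> Dsep (int (fst u)) (int (snd u)) (int (fst v)) (int (snd v)) (int (fst w)) (int (snd w))"
proof -
  have "separates w u v \<longleftrightarrow>
        \<bar>int (fst w) - int (fst u)\<bar> + \<bar>int (snd w) - int (snd u)\<bar> \<noteq>
        \<bar>int (fst w) - int (fst v)\<bar> + \<bar>int (snd w) - int (snd v)\<bar>"
    unfolding separates_def grid_dist_def by (simp add: eq_nat_nat_iff)
  thus ?thesis unfolding Dsep_def .
qed

lemma PL_grid:
  fixes m n :: nat
  assumes "u \<in> grid_vertices m n" "v \<in> grid_vertices m n" "u \<noteq> v" "2 \<le> m" "2 \<le> n"
  shows "(\<exists>i j. 1 \<le> i \<and> i < m \<and> 1 \<le> j \<and> j < n \<and>
            ((\<forall>w. (fst w \<le> i) = (snd w \<le> j) \<longrightarrow> separates w u v) \<or>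
             (\<forall>w. (fst w \<le> i) \<noteq> (snd w \<le> j) \<longrightarrow> separates w u v)))
      \<or> (\<exists>r. 1 < r \<and> r < m \<and> (\<forall>w. fst w \<noteq> r \<longrightarrow> separates w u v))
      \<or> (\<exists>c. 1 < c \<and> c < n \<and> (\<forall>w. snd w \<noteq> c \<longrightarrow> separates w u v))"
proof -
  obtain i1 j1 where u: "u = (i1, j1)" by (cases u)
  obtain i2 j2 where v: "v = (i2, j2)" by (cases v)
  have b: "1 \<le> i1" "i1 \<le> m" "1 \<le> j1" "j1 \<le> n" "1 \<le> i2" "i2 \<le> m" "1 \<le> j2" "j2 \<le> n"
    using assms(1,2) u v by (auto simp: grid_vertices_def)
  have ne: "(int i1, int j1) \<noteq> (int i2, int j2)" using assms(3) u v by simp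
  have P: "PLconc (int m) (int n) (Dsep (int i1) (int j1) (int i2) (int j2))"
    by (rule PL_gen[OF ne]) (use b assms(4,5) in linarith)+
  have S: "separates w u v \<longleftrightarrow> Dsep (int i1) (int j1) (int i2) (int j2) (int (fst w)) (int (snd w))" for w
    using sep_int u v by simp
  from P[unfolded PLconc_def] show ?thesis
  proof (elim disjE)
    assume "PLa (int m) (int n) (Dsep (int i1) (int j1) (int i2) (int j2))"
    then obtain i j where ij: "1 \<le> i" "i < int m" "1 \<le> j" "j < int n"
      and d: "(\<forall>a b. (a \<le> i) = (b \<le> j) \<longrightarrow> Dsep (int i1) (int j1) (int i2) (int j2) a b) \<or>
              (\<forall>a b. (a \<le> i) \<noteq> (b \<le> j) \<longrightarrow> Dsep (int i1) (int j1) (int i2) (int j2) a b)"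
      unfolding PLa_def by blast
    have c1: "(fst w \<le> nat i) = (int (fst w) \<le> i)" "(snd w \<le> nat j) = (int (snd w) \<le> j)" for w :: "nat \<times> nat"
      using ij by linarith+
    have "1 \<le> nat i \<and> nat i < m \<and> 1 \<le> nat j \<and> nat j < n" using ij by linarith
    moreover have "(\<forall>w. (fst w \<le> nat i) = (snd w \<le> nat j) \<longrightarrow> separates w u v) \<or>
             (\<forall>w. (fst w \<le> nat i) \<noteq> (snd w \<le> nat j) \<longrightarrow> separates w u v)"
      using d unfolding S c1 by blast
    ultimately show ?thesis by blast
  next
    assume "PLr (int m) (Dsep (int i1) (int j1) (int i2) (int j2))"
    then obtain r where r: "1 < r" "r < int m" and d: "\<forall>a b. a \<noteq> r \<longrightarrow> Dsep (int i1) (int j1) (int i2) (int j2) a b"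
      unfolding PLr_def by blast
    have "1 < nat r \<and> nat r < m" using r by linarith
    moreover have "\<forall>w. fst w \<noteq> nat r \<longrightarrow> separates w u v"
    proof (intro allI impI)
      fix w :: "nat \<times> nat" assume "fst w \<noteq> nat r"
      hence "int (fst w) \<noteq> r" using r by linarith
      thus "separates w u v" using d S by blast
    qed
    ultimately show ?thesis by blast
  next
    assume "PLc (int n) (Dsep (int i1) (int j1) (int i2) (int j2))"
    then obtain c where c: "1 < c" "c < int n" and d: "\<forall>a b. b \<noteq> c \<longrightarrow> Dsep (int i1) (int j1) (int i2) (int j2) a b"
      unfolding PLc_def by blast
    have "1 < nat c \<and> nat c < n" using c by linarith
    moreover have "\<forall>w. snd w \<noteq> nat c \<longrightarrow> separates w u v"
    proof (intro allI impI)
      fix w :: "nat \<times> nat" assume "snd w \<noteq> nat c"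
      hence "int (snd w) \<noteq> c" using c by linarith
      thus "separates w u v" using d S by blast
    qed
    ultimately show ?thesis by blast
  qed
qed

definition RRg :: "nat \<Rightarrow> (nat \<times> nat) set \<Rightarrow> (nat \<times> nat) set set" where
  "RRg m L = (\<lambda>i. {x \<in> L. fst x \<le> i}) ` {1..m-1}"
definition CCg :: "nat \<Rightarrow> (nat \<times> nat) set \<Rightarrow> (nat \<times> nat) set set" where
  "CCg n L = (\<lambda>j. {x \<in> L. snd x \<le> j}) ` {1..n-1}"

lemma sd_filter: "sd {w \<in> L. P w} {w \<in> L. Q w} = {w \<in> L. P w \<noteq> Q w}"
  unfolding sd_def by blast

lemma sep_adjB:
  assumes "separates x (i, Suc j) (Suc i, j)"
  shows "(fst x \<le> i) \<noteq> (snd x \<le> j)"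
proof
  assume h: "(fst x \<le> i) = (snd x \<le> j)"
  have "Dsep (int i) (int (Suc j)) (int (Suc i)) (int j) (int (fst x)) (int (snd x))"
    using assms sep_int by simp
  thus False using h unfolding Dsep_def by (cases "fst x \<le> i") linarith+
qed

lemma sep_adjA:
  assumes "separates x (i, j) (Suc i, Suc j)"
  shows "(fst x \<le> i) = (snd x \<le> j)"
proof (rule ccontr)
  assume h: "(fst x \<le> i) \<noteq> (snd x \<le> j)"
  have "Dsep (int i) (int j) (int (Suc i)) (int (Suc j)) (int (fst x)) (int (snd x))"
    using assms sep_int by simp
  thus False using h unfolding Dsep_def by (cases "fst x \<le> i") linarith+
qed

lemma finite_V: "finite (grid_vertices m n)"
proof -
  have "grid_vertices m n \<subseteq> {1..m} \<times> {1..n}" unfolding grid_vertices_def by auto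
  thus ?thesis using finite_subset by blast
qed

lemma tc_grid:
  assumes lmk: "landmark_set m n L"
  shows "tc L (RRg m L) (CCg n L)"
proof
  have LV: "L \<subseteq> grid_vertices m n" using lmk unfolding landmark_set_def by blast
  show "finite L" using LV finite_V finite_subset by blast
  show "\<And>R. R \<in> RRg m L \<Longrightarrow> R \<subseteq> L" unfolding RRg_def by blast
  show "\<And>C. C \<in> CCg n L \<Longrightarrow> C \<subseteq> L" unfolding CCg_def by blast
  show "chain_on (RRg m L)" unfolding chain_on_def RRg_def
  proof (intro ballI)
    fix A B assume "A \<in> (\<lambda>i. {x \<in> L. fst x \<le> i}) ` {1..m-1}" "B \<in> (\<lambda>i. {x \<in> L. fst x \<le> i}) ` {1..m-1}"
    then obtain i i' where "A = {x \<in> L. fst x \<le> i}" "B = {x \<in> L. fst x \<le> i'}" by blast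
    thus "A \<subseteq> B \<or> B \<subseteq> A" by (cases "i \<le> i'") auto
  qed
  show "chain_on (CCg n L)" unfolding chain_on_def CCg_def
  proof (intro ballI)
    fix A B assume "A \<in> (\<lambda>j. {x \<in> L. snd x \<le> j}) ` {1..n-1}" "B \<in> (\<lambda>j. {x \<in> L. snd x \<le> j}) ` {1..n-1}"
    then obtain j j' where "A = {x \<in> L. snd x \<le> j}" "B = {x \<in> L. snd x \<le> j'}" by blast
    thus "A \<subseteq> B \<or> B \<subseteq> A" by (cases "j \<le> j'") auto
  qed
  show "\<And>R C. R \<in> RRg m L \<Longrightarrow> C \<in> CCg n L \<Longrightarrow> R \<noteq> C"
  proof
    fix R C assume R: "R \<in> RRg m L" and C: "C \<in> CCg n L" and eq: "R = C"
    obtain i where i: "i \<in> {1..m-1}" "R = {x \<in> L. fst x \<le> i}" using R unfolding RRg_def by blast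
    obtain j where j: "j \<in> {1..n-1}" "C = {x \<in> L. snd x \<le> j}" using C unfolding CCg_def by blast
    have uv: "(i, Suc j) \<in> grid_vertices m n" "(Suc i, j) \<in> grid_vertices m n" "(i, Suc j) \<noteq> (Suc i, j)"
      using i j unfolding grid_vertices_def by auto
    then obtain x where x: "x \<in> L" "separates x (i, Suc j) (Suc i, j)"
      using lmk unfolding landmark_set_def by blast
    have "(fst x \<le> i) \<noteq> (snd x \<le> j)" using sep_adjB x(2) .
    hence "x \<in> R \<longleftrightarrow> x \<notin> C" using i j x(1) by auto
    thus False using eq by simp
  qed
  show "\<And>R C. R \<in> RRg m L \<Longrightarrow> C \<in> CCg n L \<Longrightarrow> R \<noteq> L - C"
  proof
    fix R C assume R: "R \<in> RRg m L" and C: "C \<in> CCg n L" and eq: "R = L - C"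
    obtain i where i: "i \<in> {1..m-1}" "R = {x \<in> L. fst x \<le> i}" using R unfolding RRg_def by blast
    obtain j where j: "j \<in> {1..n-1}" "C = {x \<in> L. snd x \<le> j}" using C unfolding CCg_def by blast
    have uv: "(i, j) \<in> grid_vertices m n" "(Suc i, Suc j) \<in> grid_vertices m n" "(i, j) \<noteq> (Suc i, Suc j)"
      using i j unfolding grid_vertices_def by auto
    then obtain x where x: "x \<in> L" "separates x (i, j) (Suc i, Suc j)"
      using lmk unfolding landmark_set_def by blast
    have "(fst x \<le> i) = (snd x \<le> j)" using sep_adjA x(2) .
    hence "x \<in> R \<longleftrightarrow> x \<in> C" using i j x(1) by auto
    thus False using eq x(1) by blast
  qed
qed

lemma row_not_landmark:
  assumes "1 < r" "r < m" "1 \<le> n" "\<forall>w\<in>L. fst w = r"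
  shows "\<not> landmark_set m n L"
proof
  assume lmk: "landmark_set m n L"
  have uv: "(r - 1, 1) \<in> grid_vertices m n" "(r + 1, 1) \<in> grid_vertices m n" "(r - 1, 1) \<noteq> (r + 1, 1)"
    using assms unfolding grid_vertices_def by auto
  then obtain x where x: "x \<in> L" "separates x (r - 1, 1) (r + 1, 1)"
    using lmk unfolding landmark_set_def by blast
  have "Dsep (int (r - 1)) 1 (int (r + 1)) 1 (int (fst x)) (int (snd x))"
    using x(2) sep_int by simp
  moreover have "fst x = r" using assms(4) x(1) by blast
  ultimately show False using assms(1) unfolding Dsep_def by simp
qed

lemma col_not_landmark:
  assumes "1 < c" "c < n" "1 \<le> m" "\<forall>w\<in>L. snd w = c"
  shows "\<not> landmark_set m n L"
proof
  assume lmk: "landmark_set m n L"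
  have uv: "(1, c - 1) \<in> grid_vertices m n" "(1, c + 1) \<in> grid_vertices m n" "(1, c - 1) \<noteq> (1, c + 1)"
    using assms unfolding grid_vertices_def by auto
  then obtain x where x: "x \<in> L" "separates x (1, c - 1) (1, c + 1)"
    using lmk unfolding landmark_set_def by blast
  have "Dsep 1 (int (c - 1)) 1 (int (c + 1)) (int (fst x)) (int (snd x))"
    using x(2) sep_int by simp
  moreover have "snd x = c" using assms(4) x(1) by blast
  ultimately show False using assms(1) unfolding Dsep_def by simp
qed

definition ess_prop :: "nat \<Rightarrow> nat \<Rightarrow> (nat \<times> nat) set \<Rightarrow> nat \<times> nat \<Rightarrow> bool" where
  "ess_prop m n L x \<longleftrightarrow>
    (\<exists>i\<in>{1..m-1}. \<exists>j\<in>{1..n-1}. sd {w\<in>L. fst w \<le> i} {w\<in>L. snd w \<le> j} = {x} \<or>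
                                    sd {w\<in>L. fst w \<le> i} {w\<in>L. snd w \<le> j} = L - {x})
    \<or> (\<exists>r. 1 < r \<and> r < m \<and> (\<forall>w\<in>L-{x}. fst w = r))
    \<or> (\<exists>c. 1 < c \<and> c < n \<and> (\<forall>w\<in>L-{x}. snd w = c))"

lemma ess:
  assumes min: "minimal_landmark_set m n L" and m2: "2 \<le> m" and n2: "2 \<le> n" and x: "x \<in> L"
  shows "ess_prop m n L x"
proof -
  have lmk: "landmark_set m n L" using min unfolding minimal_landmark_set_def by blast
  interpret T: tc L "RRg m L" "CCg n L" by (rule tc_grid[OF lmk])
  have LV: "L \<subseteq> grid_vertices m n" using lmk unfolding landmark_set_def by blast
  have "L - {x} \<subset> L" using x by blast
  hence nl: "\<not> landmark_set m n (L - {x})" using min unfolding minimal_landmark_set_def by blast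
  have "L - {x} \<subseteq> grid_vertices m n" using LV by blast
  then obtain u v where uv: "u \<in> grid_vertices m n" "v \<in> grid_vertices m n" "u \<noteq> v"
      and ns: "\<forall>w\<in>L-{x}. \<not> separates w u v"
    using nl unfolding landmark_set_def by blast
  from PL_grid[OF uv m2 n2] show ?thesis
  proof (elim disjE exE conjE)
    fix i j assume ij: "1 \<le> i" "i < m" "1 \<le> j" "j < n"
    define R where "R = {w\<in>L. fst w \<le> i}"
    define C where "C = {w\<in>L. snd w \<le> j}"
    have RC: "R \<in> RRg m L" "C \<in> CCg n L" using ij unfolding R_def C_def RRg_def CCg_def by auto
    have sdRC: "sd R C = {w\<in>L. (fst w \<le> i) \<noteq> (snd w \<le> j)}" unfolding R_def C_def by (rule sd_filter)
    have ijm: "i \<in> {1..m-1}" "j \<in> {1..n-1}" using ij by auto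
    {
      assume h: "\<forall>w. (fst w \<le> i) = (snd w \<le> j) \<longrightarrow> separates w u v"
      have sub: "L - {x} \<subseteq> sd R C" using h ns sdRC by blast
      have "x \<notin> sd R C"
      proof
        assume "x \<in> sd R C"
        hence "\<forall>w\<in>L. (fst w \<le> i) \<noteq> (snd w \<le> j)" using sub sdRC by blast
        hence "R = L - C" unfolding R_def C_def by blast
        thus False using T.lm2[OF RC] by blast
      qed
      hence "sd R C = L - {x}" using sub sdRC by blast
      thus ?thesis unfolding ess_prop_def R_def C_def using ijm by blast
    }
    {
      assume h: "\<forall>w. (fst w \<le> i) \<noteq> (snd w \<le> j) \<longrightarrow> separates w u v"
      have sub: "sd R C \<subseteq> {x}" using h ns sdRC by blast
      have "sd R C \<noteq> {}"
      proof
        assume "sd R C = {}"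
        hence "R = C" unfolding sd_def by blast
        thus False using T.lm1[OF RC] by blast
      qed
      hence "sd R C = {x}" using sub by blast
      thus ?thesis unfolding ess_prop_def R_def C_def using ijm by blast
    }
  next
    fix r assume r: "1 < r" "r < m" "\<forall>w. fst w \<noteq> r \<longrightarrow> separates w u v"
    have "\<forall>w\<in>L-{x}. fst w = r" using r(3) ns by blast
    thus ?thesis unfolding ess_prop_def using r(1,2) by blast
  next
    fix c assume c: "1 < c" "c < n" "\<forall>w. snd w \<noteq> c \<longrightarrow> separates w u v"
    have "\<forall>w\<in>L-{x}. snd w = c" using c(3) ns by blast
    thus ?thesis unfolding ess_prop_def using c(1,2) by blast
  qed
qed

lemma three_mid:
  fixes B :: "nat set"
  assumes "finite B" "3 \<le> card B"
  shows "\<exists>lo b hi. lo \<in> B \<and> b \<in> B \<and> hi \<in> B \<and> lo < b \<and> b < hi"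
proof -
  have ne: "B \<noteq> {}" using assms by auto
  define lo where "lo = Min B"
  define hi where "hi = Max B"
  have lohi: "lo \<in> B" "hi \<in> B" using assms ne unfolding lo_def hi_def by auto
  have "\<not> B \<subseteq> {lo, hi}"
  proof
    assume "B \<subseteq> {lo, hi}"
    hence "card B \<le> card {lo, hi}" by (simp add: card_mono)
    also have "\<dots> \<le> 2" by (simp add: card_insert_if)
    finally show False using assms(2) by simp
  qed
  then obtain b where b: "b \<in> B" "b \<noteq> lo" "b \<noteq> hi" by blast
  have "lo \<le> b" "b \<le> hi" using b(1) assms(1) unfolding lo_def hi_def by auto
  hence "lo < b" "b < hi" using b by auto
  thus ?thesis using lohi b(1) by blast
qed

lemma no_row_line:
  assumes min: "minimal_landmark_set m n L" and m2: "2 \<le> m" and n2: "2 \<le> n" and k4: "4 \<le> card L"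
    and x: "x \<in> L" and r: "1 < r" "r < m" and row: "\<forall>w\<in>L-{x}. fst w = r"
  shows False
proof -
  have lmk: "landmark_set m n L" using min unfolding minimal_landmark_set_def by blast
  have LV: "L \<subseteq> grid_vertices m n" using lmk unfolding landmark_set_def by blast
  have finL: "finite L" using LV finite_V finite_subset by blast
  define S where "S = L - {x}"
  have finS: "finite S" using finL unfolding S_def by simp
  have cS: "3 \<le> card S" using k4 x finL unfolding S_def by simp
  have inj: "inj_on snd S"
  proof
    fix w1 w2 assume "w1 \<in> S" "w2 \<in> S" "snd w1 = snd w2"
    moreover have "fst w1 = r" "fst w2 = r" using row \<open>w1 \<in> S\<close> \<open>w2 \<in> S\<close> unfolding S_def by auto
    ultimately show "w1 = w2" by (simp add: prod_eq_iff)
  qed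
  have "card (snd ` S) = card S" using card_image[OF inj] .
  hence "3 \<le> card (snd ` S)" using cS by simp
  then obtain lo b hi where lbh: "lo \<in> snd ` S" "b \<in> snd ` S" "hi \<in> snd ` S" "lo < b" "b < hi"
    using three_mid[of "snd ` S"] finS by blast
  obtain y where y: "y \<in> S" "snd y = b" using lbh(2) by blast
  obtain y1 where y1: "y1 \<in> S" "snd y1 = lo" using lbh(1) by blast
  obtain y2 where y2: "y2 \<in> S" "snd y2 = hi" using lbh(3) by blast
  have fy: "fst y = r" "fst y1 = r" "fst y2 = r" using row y(1) y1(1) y2(1) unfolding S_def by auto
  have yL: "y \<in> L" "y1 \<in> L" "y2 \<in> L" "y \<noteq> x" using y(1) y1(1) y2(1) unfolding S_def by auto
  have yne: "y1 \<noteq> y" "y2 \<noteq> y" using y y1 y2 lbh(4,5) by auto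
  from ess[OF min m2 n2 yL(1)] show False unfolding ess_prop_def
  proof (elim disjE bexE exE conjE)
    fix i j assume h: "sd {w\<in>L. fst w \<le> i} {w\<in>L. snd w \<le> j} = {y}"
    have "y1 \<notin> {w\<in>L. (fst w \<le> i) \<noteq> (snd w \<le> j)}" "y2 \<notin> {w\<in>L. (fst w \<le> i) \<noteq> (snd w \<le> j)}"
      "y \<in> {w\<in>L. (fst w \<le> i) \<noteq> (snd w \<le> j)}"
      using h yne unfolding sd_filter by auto
    hence "(r \<le> i) = (lo \<le> j)" "(r \<le> i) = (hi \<le> j)" "(r \<le> i) \<noteq> (b \<le> j)"
      using fy y y1 y2 yL by auto
    thus False using lbh(4,5) by (cases "r \<le> i") linarith+
  next
    fix i j assume h: "sd {w\<in>L. fst w \<le> i} {w\<in>L. snd w \<le> j} = L - {y}"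
    have "y1 \<in> {w\<in>L. (fst w \<le> i) \<noteq> (snd w \<le> j)}" "y2 \<in> {w\<in>L. (fst w \<le> i) \<noteq> (snd w \<le> j)}"
      "y \<notin> {w\<in>L. (fst w \<le> i) \<noteq> (snd w \<le> j)}"
      using h yne yL unfolding sd_filter by auto
    hence "(r \<le> i) \<noteq> (lo \<le> j)" "(r \<le> i) \<noteq> (hi \<le> j)" "(r \<le> i) = (b \<le> j)"
      using fy y y1 y2 yL by auto
    thus False using lbh(4,5) by (cases "r \<le> i") linarith+
  next
    fix r' assume h: "1 < r'" "r' < m" "\<forall>w\<in>L-{y}. fst w = r'"
    have "r' = r" using h(3) yL(2) yne(1) fy(2) by auto
    hence allr: "\<forall>w\<in>L. fst w = r" using h(3) fy(1) by auto
    have "1 \<le> n" using n2 by simp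
    thus False using row_not_landmark[OF r(1,2) _ allr] lmk by blast
  next
    fix c assume h: "1 < c" "c < n" "\<forall>w\<in>L-{y}. snd w = c"
    have "lo = c" "hi = c" using h(3) yL yne y1 y2 by auto
    thus False using lbh(4,5) by simp
  qed
qed

lemma no_col_line:
  assumes min: "minimal_landmark_set m n L" and m2: "2 \<le> m" and n2: "2 \<le> n" and k4: "4 \<le> card L"
    and x: "x \<in> L" and c: "1 < c" "c < n" and col: "\<forall>w\<in>L-{x}. snd w = c"
  shows False
proof -
  have lmk: "landmark_set m n L" using min unfolding minimal_landmark_set_def by blast
  have LV: "L \<subseteq> grid_vertices m n" using lmk unfolding landmark_set_def by blast
  have finL: "finite L" using LV finite_V finite_subset by blast
  define S where "S = L - {x}"
  have finS: "finite S" using finL unfolding S_def by simp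
  have cS: "3 \<le> card S" using k4 x finL unfolding S_def by simp
  have inj: "inj_on fst S"
  proof
    fix w1 w2 assume "w1 \<in> S" "w2 \<in> S" "fst w1 = fst w2"
    moreover have "snd w1 = c" "snd w2 = c" using col \<open>w1 \<in> S\<close> \<open>w2 \<in> S\<close> unfolding S_def by auto
    ultimately show "w1 = w2" by (simp add: prod_eq_iff)
  qed
  have "card (fst ` S) = card S" using card_image[OF inj] .
  hence "3 \<le> card (fst ` S)" using cS by simp
  then obtain lo b hi where lbh: "lo \<in> fst ` S" "b \<in> fst ` S" "hi \<in> fst ` S" "lo < b" "b < hi"
    using three_mid[of "fst ` S"] finS by blast
  obtain y where y: "y \<in> S" "fst y = b" using lbh(2) by blast
  obtain y1 where y1: "y1 \<in> S" "fst y1 = lo" using lbh(1) by blast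
  obtain y2 where y2: "y2 \<in> S" "fst y2 = hi" using lbh(3) by blast
  have fy: "snd y = c" "snd y1 = c" "snd y2 = c" using col y(1) y1(1) y2(1) unfolding S_def by auto
  have yL: "y \<in> L" "y1 \<in> L" "y2 \<in> L" "y \<noteq> x" using y(1) y1(1) y2(1) unfolding S_def by auto
  have yne: "y1 \<noteq> y" "y2 \<noteq> y" using y y1 y2 lbh(4,5) by auto
  from ess[OF min m2 n2 yL(1)] show False unfolding ess_prop_def
  proof (elim disjE bexE exE conjE)
    fix i j assume h: "sd {w\<in>L. fst w \<le> i} {w\<in>L. snd w \<le> j} = {y}"
    have "y1 \<notin> {w\<in>L. (fst w \<le> i) \<noteq> (snd w \<le> j)}" "y2 \<notin> {w\<in>L. (fst w \<le> i) \<noteq> (snd w \<le> j)}"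
      "y \<in> {w\<in>L. (fst w \<le> i) \<noteq> (snd w \<le> j)}"
      using h yne unfolding sd_filter by auto
    hence "(lo \<le> i) = (c \<le> j)" "(hi \<le> i) = (c \<le> j)" "(b \<le> i) \<noteq> (c \<le> j)"
      using fy y y1 y2 yL by auto
    thus False using lbh(4,5) by (cases "c \<le> j") linarith+
  next
    fix i j assume h: "sd {w\<in>L. fst w \<le> i} {w\<in>L. snd w \<le> j} = L - {y}"
    have "y1 \<in> {w\<in>L. (fst w \<le> i) \<noteq> (snd w \<le> j)}" "y2 \<in> {w\<in>L. (fst w \<le> i) \<noteq> (snd w \<le> j)}"
      "y \<notin> {w\<in>L. (fst w \<le> i) \<noteq> (snd w \<le> j)}"
      using h yne yL unfolding sd_filter by auto
    hence "(lo \<le> i) \<noteq> (c \<le> j)" "(hi \<le> i) \<noteq> (c \<le> j)" "(b \<le> i) = (c \<le> j)"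
      using fy y y1 y2 yL by auto
    thus False using lbh(4,5) by (cases "c \<le> j") linarith+
  next
    fix r assume h: "1 < r" "r < m" "\<forall>w\<in>L-{y}. fst w = r"
    have "lo = r" "hi = r" using h(3) yL yne y1 y2 by auto
    thus False using lbh(4,5) by simp
  next
    fix c' assume h: "1 < c'" "c' < n" "\<forall>w\<in>L-{y}. snd w = c'"
    have "c' = c" using h(3) yL(2) yne(1) fy(2) by auto
    hence allc: "\<forall>w\<in>L. snd w = c" using h(3) fy(1) by auto
    have "1 \<le> m" using m2 by simp
    thus False using col_not_landmark[OF c(1,2) _ allc] lmk by blast
  qed
qed

lemma cov_grid:
  assumes min: "minimal_landmark_set m n L" and m2: "2 \<le> m" and n2: "2 \<le> n" and k4: "4 \<le> card L"
  shows "tc.cov L (RRg m L) (CCg n L)"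
proof -
  have lmk: "landmark_set m n L" using min unfolding minimal_landmark_set_def by blast
  interpret T: tc L "RRg m L" "CCg n L" by (rule tc_grid[OF lmk])
  show ?thesis unfolding T.cov_def
  proof
    fix x assume x: "x \<in> L"
    from ess[OF min m2 n2 x] show "\<exists>R\<in>RRg m L. \<exists>C\<in>CCg n L. sd R C = {x} \<or> sd R C = L - {x}"
      unfolding ess_prop_def
    proof (elim disjE bexE exE conjE)
      fix i j assume ij: "i \<in> {1..m-1}" "j \<in> {1..n-1}"
        and h: "sd {w\<in>L. fst w \<le> i} {w\<in>L. snd w \<le> j} = {x}"
      have "{w\<in>L. fst w \<le> i} \<in> RRg m L" "{w\<in>L. snd w \<le> j} \<in> CCg n L"
        using ij unfolding RRg_def CCg_def by auto
      thus ?thesis using h by blast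
    next
      fix i j assume ij: "i \<in> {1..m-1}" "j \<in> {1..n-1}"
        and h: "sd {w\<in>L. fst w \<le> i} {w\<in>L. snd w \<le> j} = L - {x}"
      have "{w\<in>L. fst w \<le> i} \<in> RRg m L" "{w\<in>L. snd w \<le> j} \<in> CCg n L"
        using ij unfolding RRg_def CCg_def by auto
      thus ?thesis using h by blast
    next
      fix r assume "1 < r" "r < m" "\<forall>w\<in>L-{x}. fst w = r"
      thus ?thesis using no_row_line[OF min m2 n2 k4 x] by blast
    next
      fix c assume "1 < c" "c < n" "\<forall>w\<in>L-{x}. snd w = c"
      thus ?thesis using no_col_line[OF min m2 n2 k4 x] by blast
    qed
  qed
qed

lemma card_RRg: "card (RRg m L) \<le> m - 1"
proof -
  have "card (RRg m L) \<le> card {1..m-1}" unfolding RRg_def by (rule card_image_le) simp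
  thus ?thesis by simp
qed

lemma card_CCg: "card (CCg n L) \<le> n - 1"
proof -
  have "card (CCg n L) \<le> card {1..n-1}" unfolding CCg_def by (rule card_image_le) simp
  thus ?thesis by simp
qed

lemma small_sets:
  assumes "finite L" "card L \<le> 1" "A \<subseteq> L" "B \<subseteq> L"
  shows "A = B \<or> A = L - B"
proof (rule ccontr)
  assume h: "\<not> (A = B \<or> A = L - B)"
  have all: "\<forall>x\<in>L. \<forall>y\<in>L. x = y" using assms(1,2) card_le_Suc0_iff_eq by auto
  from h obtain z where z: "z \<in> L" "z \<in> A \<longleftrightarrow> z \<notin> B" using assms(3,4) by blast
  from h obtain z' where z': "z' \<in> L" "z' \<in> A \<longleftrightarrow> z' \<in> B" using assms(3,4) by blast
  have "z = z'" using all z(1) z'(1) by blast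
  thus False using z z' by blast
qed

lemma card_ge2:
  assumes lmk: "landmark_set m n L" and m2: "2 \<le> m" and n2: "2 \<le> n"
  shows "2 \<le> card L"
proof (rule ccontr)
  assume "\<not> 2 \<le> card L"
  hence c1: "card L \<le> 1" by simp
  interpret T: tc L "RRg m L" "CCg n L" by (rule tc_grid[OF lmk])
  have R: "{w\<in>L. fst w \<le> 1} \<in> RRg m L" using m2 unfolding RRg_def by auto
  have C: "{w\<in>L. snd w \<le> 1} \<in> CCg n L" using n2 unfolding CCg_def by auto
  have "{w\<in>L. fst w \<le> 1} = {w\<in>L. snd w \<le> 1} \<or> {w\<in>L. fst w \<le> 1} = L - {w\<in>L. snd w \<le> 1}"
    using small_sets[OF T.fin c1] by blast
  thus False using T.lm1[OF R C] T.lm2[OF R C] by blast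
qed

theorem mainTheorem3:
  fixes m n :: nat and L :: "(nat \<times> nat) set"
  assumes "m \<ge> 2" and "n \<ge> 2" and "minimal_landmark_set m n L"
  shows "card L \<in> {2, 3} \<or> (even (card L) \<and> 4 \<le> card L \<and> card L \<le> 2 * min m n - 2)"
proof -
  have lmk: "landmark_set m n L" using assms(3) unfolding minimal_landmark_set_def by blast
  interpret T: tc L "RRg m L" "CCg n L" by (rule tc_grid[OF lmk])
  have c2: "2 \<le> card L" using card_ge2[OF lmk assms(1,2)] .
  show ?thesis
  proof (cases "card L \<le> 3")
    case True
    thus ?thesis using c2 by auto
  next
    case False
    hence k4: "4 \<le> card L" by simp
    have cv: T.cov using cov_grid[OF assms(3) assms(1,2) k4] .
    have b1: "card L \<le> 2 * (m - 1)" using T.bound_R[OF cv k4] card_RRg[of m L] by linarith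
    have b2: "card L \<le> 2 * (n - 1)" using T.bound_C[OF cv k4] card_CCg[of n L] by linarith
    have ev: "even (card L)"
    proof (cases "card L = 4")
      case True thus ?thesis by simp
    next
      case False
      hence "5 \<le> card L" using k4 by simp
      thus ?thesis using T.even_main[OF cv] by blast
    qed
    have "card L \<le> 2 * min m n - 2"
    proof (cases "m \<le> n")
      case True thus ?thesis using b1 by (simp add: min_def)
    next
      case False thus ?thesis using b2 by (simp add: min_def)
    qed
    thus ?thesis using ev k4 by simp
  qed
qed

end
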